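(* $\mathrm{Prim}\,\mathcal Mag_\omega(2)=K\cdot[x_1,x_2]$. The space $\mathrm{Prim}\,\mathcal Mag_\omega(3)$ has dimension $14$ and is generated as a $\Sigma_3$-module by $(x_1,x_2,x_3)_t$, $(x_1,x_2,x_3)_b$ and $[[x_1,x_2],x_3]$, which satisfy $[[x_2,x_1],x_3]=-[[x_1,x_2],x_3]$ and the non-associative Jacobi relation $$[[x_1,x_2],x_3]+[[x_3,x_1],x_2]+[[x_2,x_3],x_1]=(x_1,x_2,x_3)_b-(x_2,x_1,x_3)_b+(x_3,x_1,x_2)_b-(x_1,x_3,x_2)_b+(x_2,x_3,x_1)_b-(x_3,x_2,x_1)_b.$$ Moreover, as a representation of $\Sigma_3$, $\mathrm{Prim}\,\mathcal Mag_\omega(3)\cong 2\,V_{(3)}\oplus5\,V_{(2,1)}\oplus2\,V_{(1,1,1)}$.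
   Context: $K$ is a field of characteristic $0$. A planar rooted tree is reduced if no vertex has exactly one incoming edge. $K\{x_1,x_2,x_3\}_\infty$ is the $K$-vector space with basis the empty tree $1$ and all planar reduced rooted trees with leaves labelled by $x_1,x_2,x_3$; for $k\ge2$, $\vee^k$ grafts $k$ nonempty trees (in order) onto a new root, extended multilinearly, with unit conventions (arguments $1$ are omitted, $\vee^1=\mathrm{id}$, $\vee^k(1,\dots,1)=1$); $a\cdot b:=\vee^2(a,b)$. The tensor square carries the operations componentwise ($\vee^k(a_1\otimes b_1,\dots)=\vee^k(a_1,\dots)\otimes\vee^k(b_1,\dots)$), and the co-addition $\Delta_a$ is the unique unital homomorphism with $\Delta_a(x_i)=x_i\otimes1+1\otimes x_i$; $f$ is primitive if $\Delta_a(f)=f\otimes1+1\otimes f$. $\mathrm{Prim}\,\mathcal Mag_\omega(n)$ is the space of primitive elements multilinear of degree $n$ in $x_1,\dots,x_n$, with $\Sigma_n$ acting by permuting variables. Notation: $[a,b]=a\cdot b-b\cdot a$, $(a,b,c)_b=(a\cdot b)\cdot c-a\cdot(b\cdot c)$, $(a,b,c)_t=(a\cdot b)\cdot c-\vee^3(a,b,c)$. $V_\lambda$ denotes the irreducible $\Sigma_3$-module for the partition $\lambda$ ($V_{(3)}$ trivial, $V_{(2,1)}$ two-dimensional, $V_{(1,1,1)}$ sign). *)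

theory Defs
  imports Complex_Main "HOL-Combinatorics.Permutations" "HOL-Library.Function_Algebras"
begin

text \<open>One is the empty tree 1; Leaf i is the one-leaf tree labelled x_i;
  Node ts is the grafting of the trees ts onto a new root.\<close>
datatype mtree = One | Leaf nat | Node "mtree list"

text \<open>Nonempty planar reduced rooted trees (no vertex with exactly one incoming edge).\<close>
fun proper :: "mtree \<Rightarrow> bool" where
  "proper One = False"
| "proper (Leaf i) = True"
| "proper (Node ts) = (2 \<le> length ts \<and> (\<forall>t\<in>set ts. proper t))"

fun leaves :: "mtree \<Rightarrow> nat list" where
  "leaves One = []"
| "leaves (Leaf i) = [i]"
| "leaves (Node ts) = concat (map leaves ts)"

fun relabel :: "(nat \<Rightarrow> nat) \<Rightarrow> mtree \<Rightarrow> mtree" where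
  "relabel p One = One"
| "relabel p (Leaf i) = Leaf (p i)"
| "relabel p (Node ts) = Node (map (relabel p) ts)"

definition graft :: "mtree list \<Rightarrow> mtree" where
  "graft ts = (let ts' = filter (\<lambda>t. t \<noteq> One) ts in
     if ts' = [] then One else if length ts' = 1 then hd ts' else Node ts')"

text \<open>Vectors are (finitely supported) coefficient functions on trees; the tensor
  square is represented by coefficient functions on pairs of trees.\<close>
type_synonym 'k vec = "mtree \<Rightarrow> 'k"
type_synonym 'k vec2 = "mtree \<times> mtree \<Rightarrow> 'k"

definition supp :: "('a \<Rightarrow> 'k::zero) \<Rightarrow> 'a set" where
  "supp f = {x. f x \<noteq> 0}"

definition sc :: "'k::field \<Rightarrow> 'k vec \<Rightarrow> 'k vec" where
  "sc c f = (\<lambda>t. c * f t)"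

definition X :: "nat \<Rightarrow> 'k::field vec" where
  "X i = (\<lambda>t. if t = Leaf i then 1 else 0)"

text \<open>Multilinear extension of the grafting operations on K{x} and on its tensor square
  (componentwise).\<close>
definition mgraft :: "'k::field vec list \<Rightarrow> 'k vec" where
  "mgraft vs = (\<lambda>u. \<Sum>as\<in>listset (map supp vs).
      if graft as = u then prod_list (map2 (\<lambda>w a. w a) vs as) else 0)"

definition mgraft2 :: "'k::field vec2 list \<Rightarrow> 'k vec2" where
  "mgraft2 vs = (\<lambda>(u, v). \<Sum>ps\<in>listset (map supp vs).
      if graft (map fst ps) = u \<and> graft (map snd ps) = v
      then prod_list (map2 (\<lambda>w p. w p) vs ps) else 0)"

definition mul :: "'k::field vec \<Rightarrow> 'k vec \<Rightarrow> 'k vec" where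
  "mul a b = mgraft [a, b]"

definition vee3 :: "'k::field vec \<Rightarrow> 'k vec \<Rightarrow> 'k vec \<Rightarrow> 'k vec" where
  "vee3 a b c = mgraft [a, b, c]"

definition bracket :: "'k::field vec \<Rightarrow> 'k vec \<Rightarrow> 'k vec" where
  "bracket a b = mul a b - mul b a"

definition assoc_b :: "'k::field vec \<Rightarrow> 'k vec \<Rightarrow> 'k vec \<Rightarrow> 'k vec" where
  "assoc_b a b c = mul (mul a b) c - mul a (mul b c)"

definition assoc_t :: "'k::field vec \<Rightarrow> 'k vec \<Rightarrow> 'k vec \<Rightarrow> 'k vec" where
  "assoc_t a b c = mul (mul a b) c - vee3 a b c"

text \<open>Co-addition on basis trees: the unital homomorphism with
  Delta(x_i) = x_i \<otimes> 1 + 1 \<otimes> x_i, i.e. Delta(1) = 1 \<otimes> 1 and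
  Delta(\<or>^k(t_1,...,t_k)) = \<or>^k(Delta t_1, ..., Delta t_k).\<close>
fun delta :: "mtree \<Rightarrow> 'k::field vec2" where
  "delta One = (\<lambda>p. if p = (One, One) then 1 else 0)"
| "delta (Leaf i) = (\<lambda>p. if p = (Leaf i, One) \<or> p = (One, Leaf i) then 1 else 0)"
| "delta (Node ts) = mgraft2 (map delta ts)"

definition Delta :: "'k::field vec \<Rightarrow> 'k vec2" where
  "Delta f = (\<lambda>p. \<Sum>t\<in>supp f. f t * delta t p)"

definition ten_one :: "'k::field vec \<Rightarrow> 'k vec2" where
  "ten_one f = (\<lambda>(u, v). if v = One then f u else 0)"

definition one_ten :: "'k::field vec \<Rightarrow> 'k vec2" where
  "one_ten f = (\<lambda>(u, v). if u = One then f v else 0)"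

definition primitive :: "'k::field vec \<Rightarrow> bool" where
  "primitive f \<longleftrightarrow> Delta f = ten_one f + one_ten f"

definition Prim :: "nat \<Rightarrow> 'k::field vec set" where
  "Prim n = {f. finite (supp f) \<and>
      (\<forall>t\<in>supp f. proper t \<and> mset (leaves t) = mset [1..<Suc n]) \<and> primitive f}"

text \<open>Action of Sigma_n by permuting variables: sigma . x_i = x_(sigma i).\<close>
definition act :: "(nat \<Rightarrow> nat) \<Rightarrow> 'k::field vec \<Rightarrow> 'k vec" where
  "act \<sigma> f = (\<lambda>t. f (relabel (inv \<sigma>) t))"

type_synonym 'k rep = "(nat \<Rightarrow> 'k) set \<times> ((nat \<Rightarrow> nat) \<Rightarrow> (nat \<Rightarrow> 'k) \<Rightarrow> (nat \<Rightarrow> 'k))"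

text \<open>V_(3): the trivial representation on K.\<close>
definition V_triv :: "'k::field rep" where
  "V_triv = ({v. \<forall>i. i \<noteq> 0 \<longrightarrow> v i = 0}, \<lambda>\<sigma> v. v)"

text \<open>V_(1,1,1): the sign representation on K.\<close>
definition V_sign :: "'k::field rep" where
  "V_sign = ({v. \<forall>i. i \<noteq> 0 \<longrightarrow> v i = 0}, \<lambda>\<sigma> v. (\<lambda>i. of_int (sign \<sigma>) * v i))"

text \<open>V_(2,1): the standard representation {v \<in> K^3 | v_1+v_2+v_3 = 0}, with
  sigma . e_i = e_(sigma i).\<close>
definition V_std :: "'k::field rep" where
  "V_std = ({v. (\<forall>i. i \<notin> {1,2,3} \<longrightarrow> v i = 0) \<and> v 1 + v 2 + v 3 = 0},
            \<lambda>\<sigma> v. v \<circ> inv \<sigma>)"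

definition dsum_carrier :: "'k::field rep list \<Rightarrow> (nat \<Rightarrow> nat \<Rightarrow> 'k) set" where
  "dsum_carrier Rs = {w. (\<forall>j<length Rs. w j \<in> fst (Rs ! j)) \<and> (\<forall>j\<ge>length Rs. w j = 0)}"

definition dsum_act :: "'k::field rep list \<Rightarrow> (nat \<Rightarrow> nat) \<Rightarrow> (nat \<Rightarrow> nat \<Rightarrow> 'k) \<Rightarrow> (nat \<Rightarrow> nat \<Rightarrow> 'k)" where
  "dsum_act Rs \<sigma> w = (\<lambda>j. if j < length Rs then snd (Rs ! j) \<sigma> (w j) else 0)"

definition sym3_iso :: "'k::field vec set \<Rightarrow> 'k rep list \<Rightarrow> bool" where
  "sym3_iso P Rs \<longleftrightarrow> (\<exists>\<phi>.
      (\<forall>f\<in>P. \<forall>g\<in>P. \<phi> (f + g) = \<phi> f + \<phi> g) \<and>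
      (\<forall>c. \<forall>f\<in>P. \<phi> (sc c f) = (\<lambda>j i. c * \<phi> f j i)) \<and>
      bij_betw \<phi> P (dsum_carrier Rs) \<and>
      (\<forall>\<sigma>. \<sigma> permutes {1,2,3} \<longrightarrow> (\<forall>f\<in>P. \<phi> (act \<sigma> f) = dsum_act Rs \<sigma> (\<phi> f))))"

end

theory Submission
  imports Defs
begin


abbreviation TL :: "nat \<Rightarrow> nat \<Rightarrow> nat \<Rightarrow> mtree" where
  "TL a b c \<equiv> Node [Node [Leaf a, Leaf b], Leaf c]"
abbreviation TR :: "nat \<Rightarrow> nat \<Rightarrow> nat \<Rightarrow> mtree" where
  "TR a b c \<equiv> Node [Leaf a, Node [Leaf b, Leaf c]]"
abbreviation TC :: "nat \<Rightarrow> nat \<Rightarrow> nat \<Rightarrow> mtree" where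
  "TC a b c \<equiv> Node [Leaf a, Leaf b, Leaf c]"

lemma relabel_comp: "relabel p (relabel q t) = relabel (p \<circ> q) t"
  by (induction t) auto

lemma relabel_id: "relabel id t = t"
  by (induction t) (auto simp: map_idI)

lemma proper_relabel: "proper (relabel p t) = proper t"
  by (induction t) auto

lemma leaves_relabel: "leaves (relabel p t) = map p (leaves t)"
  by (induction t) (simp_all add: map_concat o_def cong: map_cong)

lemma len_ge: "proper t \<Longrightarrow> 1 \<le> length (leaves t)"
proof (induction t)
  case (Node ts)
  then obtain t1 where t1: "t1 \<in> set ts" by (cases ts) auto
  have "1 \<le> length (leaves t1)" using Node t1 by auto
  also have "\<dots> \<le> sum_list (map (\<lambda>t. length (leaves t)) ts)"
    using t1 by (intro member_le_sum_list) auto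
  finally show ?case by (simp add: length_concat o_def)
qed auto

lemma node_len: "proper (Node ts) \<Longrightarrow> length ts \<le> length (leaves (Node ts))"
proof -
  assume p: "proper (Node ts)"
  have "length ts = sum_list (map (\<lambda>t. 1::nat) ts)" by (simp add: sum_list_triv)
  also have "\<dots> \<le> sum_list (map (\<lambda>t. length (leaves t)) ts)"
    using p len_ge by (intro sum_list_mono) auto
  finally show ?thesis by (simp add: length_concat o_def)
qed

lemma len1: "proper t \<Longrightarrow> length (leaves t) = 1 \<Longrightarrow> \<exists>a. t = Leaf a"
proof (cases t)
  case (Node ts)
  assume "proper t" "length (leaves t) = 1"
  then show ?thesis using node_len[of ts] Node by auto
qed auto

lemma len2: "proper t \<Longrightarrow> length (leaves t) = 2 \<Longrightarrow> \<exists>a b. t = Node [Leaf a, Leaf b]"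
proof (cases t)
  case (Node ts)
  assume p: "proper t" and l: "length (leaves t) = 2"
  have "length ts \<le> 2" using node_len[of ts] Node p l by auto
  moreover have "2 \<le> length ts" using p Node by auto
  ultimately have "length ts = 2" by simp
  then obtain x y where ts: "ts = [x, y]"
    by (metis (no_types, lifting) One_nat_def Suc_1 length_0_conv length_Suc_conv)
  have px: "proper x" "proper y" using p Node ts by auto
  have "length (leaves x) + length (leaves y) = 2" using l Node ts by simp
  then have "length (leaves x) = 1" "length (leaves y) = 1"
    using len_ge[OF px(1)] len_ge[OF px(2)] by auto
  then show ?thesis using len1 px Node ts by fastforce
qed auto

lemma len3: "proper t \<Longrightarrow> length (leaves t) = 3 \<Longrightarrow>
   \<exists>a b c. t = TL a b c \<or> t = TR a b c \<or> t = TC a b c"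
proof (cases t)
  case (Node ts)
  assume p: "proper t" and l: "length (leaves t) = 3"
  have "length ts \<le> 3" using node_len[of ts] Node p l by auto
  moreover have "2 \<le> length ts" using p Node by auto
  ultimately have "length ts = 2 \<or> length ts = 3" by auto
  then show ?thesis
  proof
    assume "length ts = 2"
    then obtain x y where ts: "ts = [x, y]"
      by (metis (no_types, lifting) One_nat_def Suc_1 length_0_conv length_Suc_conv)
    have px: "proper x" "proper y" using p Node ts by auto
    have "length (leaves x) + length (leaves y) = 3" using l Node ts by simp
    then have "(length (leaves x) = 1 \<and> length (leaves y) = 2) \<or> (length (leaves x) = 2 \<and> length (leaves y) = 1)"
      using len_ge[OF px(1)] len_ge[OF px(2)] by auto
    then show ?thesis
    proof
      assume "length (leaves x) = 1 \<and> length (leaves y) = 2"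
      then obtain a b c where "x = Leaf a" "y = Node [Leaf b, Leaf c]" using len1 len2 px by metis
      then show ?thesis using Node ts by blast
    next
      assume "length (leaves x) = 2 \<and> length (leaves y) = 1"
      then obtain a b c where "x = Node [Leaf a, Leaf b]" "y = Leaf c" using len1 len2 px by metis
      then show ?thesis using Node ts by blast
    qed
  next
    assume "length ts = 3"
    then obtain x y z where ts: "ts = [x, y, z]"
      by (metis (no_types, lifting) length_0_conv length_Suc_conv numeral_3_eq_3)
    have px: "proper x" "proper y" "proper z" using p Node ts by auto
    have "length (leaves x) + length (leaves y) + length (leaves z) = 3" using l Node ts by simp
    then have "length (leaves x) = 1" "length (leaves y) = 1" "length (leaves z) = 1"
      using len_ge[OF px(1)] len_ge[OF px(2)] len_ge[OF px(3)] by auto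
    then obtain a b c where "x = Leaf a" "y = Leaf b" "z = Leaf c" using len1 px by metis
    then show ?thesis using Node ts by blast
  qed
qed auto

lemma mset3: "mset [a,b,c::nat] = mset [1,2,3] \<Longrightarrow>
  (a,b,c) \<in> {(1,2,3),(1,3,2),(2,1,3),(2,3,1),(3,1,2),(3,2,1)}"
proof -
  assume m: "mset [a,b,c::nat] = mset [1,2,3]"
  then have s: "set [a,b,c] = {1,2,3}" using mset_eq_setD[OF m] by simp
  have d: "distinct [a,b,c]" using mset_eq_imp_distinct_iff[OF m] by simp
  have "a \<in> {1,2,3}" "b \<in> {1,2,3}" "c \<in> {1,2,3}" using s by (auto simp del: insert_iff)
  then show ?thesis using d by auto
qed

lemma mset2: "mset [a,b::nat] = mset [1,2] \<Longrightarrow> (a,b) \<in> {(1,2),(2,1)}"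
proof -
  assume m: "mset [a,b::nat] = mset [1,2]"
  then have s: "set [a,b] = {1,2}" using mset_eq_setD[OF m] by simp
  have d: "distinct [a,b]" using mset_eq_imp_distinct_iff[OF m] by simp
  have "a \<in> {1,2}" "b \<in> {1,2}" using s by (auto simp del: insert_iff)
  then show ?thesis using d by auto
qed


definition indv :: "'a set \<Rightarrow> 'a \<Rightarrow> 'k::field" where
  "indv S = (\<lambda>p. if p \<in> S then 1 else 0)"

lemma supp_indv[simp]: "supp (indv S :: 'a \<Rightarrow> 'k::field) = S"
  by (auto simp: supp_def indv_def)

lemma set_Cons_insert[simp]: "set_Cons (insert a A) XS = Cons a ` XS \<union> set_Cons A XS"
  by (auto simp: set_Cons_def)

lemma set_Cons_empty[simp]: "set_Cons {} XS = {}"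
  by (auto simp: set_Cons_def)

lemma finite_listset: "\<forall>S\<in>set Ss. finite S \<Longrightarrow> finite (listset Ss)"
proof (induction Ss)
  case (Cons A As)
  have "set_Cons A (listset As) = (\<lambda>(x,xs). x # xs) ` (A \<times> listset As)"
    by (auto simp: set_Cons_def)
  then show ?case using Cons by auto
qed auto

lemma prod_indv: "ps \<in> listset Ss \<Longrightarrow>
   prod_list (map2 (\<lambda>w p. w p) (map indv Ss) ps) = (1::'k::field)"
proof (induction Ss arbitrary: ps)
  case Nil then show ?case by simp
next
  case (Cons A As)
  then obtain x xs where "ps = x # xs" "x \<in> A" "xs \<in> listset As" by (auto simp: set_Cons_def)
  then show ?case using Cons by (simp add: indv_def)
qed

definition gr :: "(mtree \<times> mtree) list \<Rightarrow> mtree \<times> mtree" where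
  "gr ps = (graft (map fst ps), graft (map snd ps))"

lemma sum_if_inj:
  assumes "finite A" "inj_on h A"
  shows "(\<Sum>a\<in>A. if h a = y then (1::'k::field) else 0) = indv (h ` A) y"
proof (cases "y \<in> h ` A")
  case True
  then obtain a0 where a0: "a0 \<in> A" "h a0 = y" by auto
  have "(\<Sum>a\<in>A. if h a = y then (1::'k) else 0) = (\<Sum>a\<in>A. if a = a0 then 1 else 0)"
    using assms(2) a0 by (intro sum.cong) (auto simp: inj_on_def)
  also have "\<dots> = 1" using a0 assms(1) by simp
  finally show ?thesis using True by (simp add: indv_def)
next
  case False
  then show ?thesis by (auto simp: indv_def intro!: sum.neutral)
qed

lemma mgraft2_indv:
  assumes "\<forall>S\<in>set Ss. finite S" "inj_on gr (listset Ss)"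
  shows "mgraft2 (map indv Ss) = (indv (gr ` listset Ss) :: 'k::field vec2)"
proof (rule ext, clarify)
  fix u v
  have "mgraft2 (map indv Ss) (u, v) =
     (\<Sum>ps\<in>listset Ss. if gr ps = (u,v) then (1::'k) else 0)"
    unfolding mgraft2_def by (auto simp: o_def gr_def prod_indv intro!: sum.cong)
  also have "\<dots> = indv (gr ` listset Ss) (u,v)"
    using assms finite_listset by (intro sum_if_inj) auto
  finally show "mgraft2 (map indv Ss) (u, v) = (indv (gr ` listset Ss) :: 'k vec2) (u, v)" .
qed

lemma delta_Leaf: "delta (Leaf i) = indv {(Leaf i, One), (One, Leaf i)}"
  by (auto simp: indv_def)

definition cross :: "nat \<Rightarrow> nat \<Rightarrow> nat \<Rightarrow> (mtree \<times> mtree) set" where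
  "cross a b c = {(Leaf a, Node [Leaf b, Leaf c]), (Leaf b, Node [Leaf a, Leaf c]),
     (Leaf c, Node [Leaf a, Leaf b]), (Node [Leaf a, Leaf b], Leaf c),
     (Node [Leaf a, Leaf c], Leaf b), (Node [Leaf b, Leaf c], Leaf a)}"

lemma delta_N2: "a \<noteq> b \<Longrightarrow> delta (Node [Leaf a, Leaf b]) =
   indv {(Node [Leaf a, Leaf b], One), (Leaf a, Leaf b), (Leaf b, Leaf a), (One, Node [Leaf a, Leaf b])}"
proof -
  assume ab: "a \<noteq> b"
  have "delta (Node [Leaf a, Leaf b]) = mgraft2 (map indv [{(Leaf a, One), (One, Leaf a)}, {(Leaf b, One), (One, Leaf b)}])"
    by (simp only: delta.simps(3) list.map delta_Leaf)
  also have "\<dots> = indv (gr ` listset [{(Leaf a, One), (One, Leaf a)}, {(Leaf b, One), (One, Leaf b)}])"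
    using ab by (intro mgraft2_indv) (auto simp: inj_on_def gr_def graft_def)
  also have "gr ` listset [{(Leaf a, One), (One, Leaf a)}, {(Leaf b, One), (One, Leaf b)}] =
     {(Node [Leaf a, Leaf b], One), (Leaf a, Leaf b), (Leaf b, Leaf a), (One, Node [Leaf a, Leaf b])}"
    by (auto simp: gr_def graft_def)
  finally show ?thesis .
qed


lemma delta_TL: assumes "distinct [a,b,c]"
  shows "(delta (TL a b c) :: 'k::field vec2) = indv (insert (TL a b c, One) (insert (One, TL a b c) (cross a b c)))"
proof -
  have h: "(delta (Node [Leaf a, Leaf b]) :: 'k vec2) =
   indv {(Node [Leaf a, Leaf b], One), (Leaf a, Leaf b), (Leaf b, Leaf a), (One, Node [Leaf a, Leaf b])}"
    using assms by (intro delta_N2) auto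
  let ?Ss = "[{(Node [Leaf a, Leaf b], One), (Leaf a, Leaf b), (Leaf b, Leaf a), (One, Node [Leaf a, Leaf b])},
              {(Leaf c, One), (One, Leaf c)}]"
  have "(delta (TL a b c) :: 'k vec2) = mgraft2 (map delta [Node [Leaf a, Leaf b], Leaf c])" by (rule delta.simps(3))
  also have "\<dots> = mgraft2 (map indv ?Ss)" using h by (simp add: delta_Leaf del: delta.simps)
  also have "\<dots> = indv (gr ` listset ?Ss)"
    using assms by (intro mgraft2_indv) (auto simp: inj_on_def gr_def graft_def)
  also have "gr ` listset ?Ss = insert (TL a b c, One) (insert (One, TL a b c) (cross a b c))"
    using assms by (auto simp: gr_def graft_def cross_def)
  finally show ?thesis .
qed

lemma delta_TR: assumes "distinct [a,b,c]"
  shows "(delta (TR a b c) :: 'k::field vec2) = indv (insert (TR a b c, One) (insert (One, TR a b c) (cross a b c)))"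
proof -
  have h: "(delta (Node [Leaf b, Leaf c]) :: 'k vec2) =
   indv {(Node [Leaf b, Leaf c], One), (Leaf b, Leaf c), (Leaf c, Leaf b), (One, Node [Leaf b, Leaf c])}"
    using assms by (intro delta_N2) auto
  let ?Ss = "[{(Leaf a, One), (One, Leaf a)},
     {(Node [Leaf b, Leaf c], One), (Leaf b, Leaf c), (Leaf c, Leaf b), (One, Node [Leaf b, Leaf c])}]"
  have "(delta (TR a b c) :: 'k vec2) = mgraft2 (map delta [Leaf a, Node [Leaf b, Leaf c]])" by (rule delta.simps(3))
  also have "\<dots> = mgraft2 (map indv ?Ss)" using h by (simp add: delta_Leaf del: delta.simps)
  also have "\<dots> = indv (gr ` listset ?Ss)"
    using assms by (intro mgraft2_indv) (auto simp: inj_on_def gr_def graft_def)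
  also have "gr ` listset ?Ss = insert (TR a b c, One) (insert (One, TR a b c) (cross a b c))"
    using assms by (auto simp: gr_def graft_def cross_def)
  finally show ?thesis .
qed

lemma delta_TC: assumes "distinct [a,b,c]"
  shows "(delta (TC a b c) :: 'k::field vec2) = indv (insert (TC a b c, One) (insert (One, TC a b c) (cross a b c)))"
proof -
  let ?Ss = "[{(Leaf a, One), (One, Leaf a)}, {(Leaf b, One), (One, Leaf b)}, {(Leaf c, One), (One, Leaf c)}]"
  have "(delta (TC a b c) :: 'k vec2) = mgraft2 (map delta [Leaf a, Leaf b, Leaf c])" by (rule delta.simps(3))
  also have "\<dots> = mgraft2 (map indv ?Ss)" by (simp add: delta_Leaf del: delta.simps)
  also have "\<dots> = indv (gr ` listset ?Ss)"
    using assms by (intro mgraft2_indv) (auto simp: inj_on_def gr_def graft_def)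
  also have "gr ` listset ?Ss = insert (TC a b c, One) (insert (One, TC a b c) (cross a b c))"
    using assms by (auto simp: gr_def graft_def cross_def)
  finally show ?thesis .
qed


definition T3 :: "mtree list" where
  "T3 = [TL 1 2 3, TR 1 2 3, TC 1 2 3, TL 1 3 2, TR 1 3 2, TC 1 3 2,
         TL 2 1 3, TR 2 1 3, TC 2 1 3, TL 2 3 1, TR 2 3 1, TC 2 3 1,
         TL 3 1 2, TR 3 1 2, TC 3 1 2, TL 3 2 1, TR 3 2 1, TC 3 2 1]"

lemma distinct_T3: "distinct T3" by (simp add: T3_def)

lemma T3_char: "(proper t \<and> mset (leaves t) = mset [1,2,3]) \<longleftrightarrow> t \<in> set T3"
proof
  assume a: "proper t \<and> mset (leaves t) = mset [1,2,3]"
  then have "length (leaves t) = 3" by (metis size_mset length_Cons list.size(3) numeral_3_eq_3 One_nat_def)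
  then obtain a b c where t: "t = TL a b c \<or> t = TR a b c \<or> t = TC a b c" using len3 a by blast
  then have "mset [a,b,c] = mset [1,2,3]" using a by auto
  then have "(a,b,c) \<in> {(1,2,3),(1,3,2),(2,1,3),(2,3,1),(3,1,2),(3,2,1)}" by (rule mset3)
  then have "TL a b c \<in> set T3 \<and> TR a b c \<in> set T3 \<and> TC a b c \<in> set T3"
    by (elim insertE emptyE; simp add: T3_def)
  then show "t \<in> set T3" using t by blast
next
  assume "t \<in> set T3"
  then show "proper t \<and> mset (leaves t) = mset [1,2,3]" by (auto simp: T3_def)
qed

definition van :: "'k::field vec \<Rightarrow> bool" where
  "van f \<longleftrightarrow> (\<forall>t. t \<notin> set T3 \<longrightarrow> f t = 0)"

lemma upt3: "[1..<Suc 3] = [1,2,3::nat]" by (simp add: upt_rec)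

lemma Prim3_iff: "f \<in> Prim 3 \<longleftrightarrow> van f \<and> primitive f"
proof -
  have "(\<forall>t\<in>supp f. proper t \<and> mset (leaves t) = mset [1..<Suc 3]) \<longleftrightarrow> van f"
    unfolding upt3 T3_char by (auto simp: van_def supp_def)
  moreover have "van f \<Longrightarrow> finite (supp f)"
    by (rule finite_subset[of _ "set T3"]) (auto simp: van_def supp_def)
  ultimately show ?thesis unfolding Prim_def by auto
qed

lemma Delta_van: assumes "van f"
  shows "Delta f p = sum_list (map (\<lambda>t. f t * delta t p) T3)"
proof -
  have "Delta f p = (\<Sum>t\<in>supp f. f t * delta t p)" by (simp add: Delta_def)
  also have "\<dots> = (\<Sum>t\<in>set T3. f t * delta t p)"
    using assms by (intro sum.mono_neutral_left) (auto simp: van_def supp_def)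
  also have "\<dots> = sum_list (map (\<lambda>t. f t * delta t p) T3)"
    using distinct_T3 by (rule sum.distinct_set_conv_list)
  finally show ?thesis .
qed

definition G :: "'k::field vec \<Rightarrow> nat \<Rightarrow> nat \<Rightarrow> nat \<Rightarrow> 'k" where
  "G f a b c = f (TL a b c) + f (TR a b c) + f (TC a b c)"


definition eqs3 :: "'k::field vec \<Rightarrow> bool" where
  "eqs3 f \<longleftrightarrow>
     f (TC 1 2 3) = G f 3 2 1 - f (TL 1 2 3) - f (TR 1 2 3) \<and>
     f (TC 2 1 3) = G f 3 1 2 - f (TL 2 1 3) - f (TR 2 1 3) \<and>
     f (TC 1 3 2) = - G f 3 1 2 - G f 3 2 1 - f (TL 1 3 2) - f (TR 1 3 2) \<and>
     f (TC 2 3 1) = - G f 3 1 2 - G f 3 2 1 - f (TL 2 3 1) - f (TR 2 3 1)"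

lemmas dsimps = T3_def delta_TL delta_TR delta_TC cross_def indv_def

lemma prim3_fwd: assumes "van f" "primitive f"
  shows "eqs3 f"
proof -
  have P: "\<And>p. Delta f p = ten_one f p + one_ten f p" using fun_cong[OF assms(2)[unfolded primitive_def]] by simp
  have Z: "\<And>u v. u \<noteq> One \<Longrightarrow> v \<noteq> One \<Longrightarrow> Delta f (u, v) = 0"
    using P by (simp add: ten_one_def one_ten_def)
  have e1: "G f 1 2 3 + G f 2 1 3 + G f 2 3 1 = 0"
    using Z[of "Leaf 1" "Node [Leaf 2, Leaf 3]"] unfolding Delta_van[OF assms(1)]
    by (simp add: dsimps G_def algebra_simps del: delta.simps)
  have e2: "G f 1 3 2 + G f 3 1 2 + G f 3 2 1 = 0"
    using Z[of "Leaf 1" "Node [Leaf 3, Leaf 2]"] unfolding Delta_van[OF assms(1)]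
    by (simp add: dsimps G_def algebra_simps del: delta.simps)
  have e3: "G f 1 2 3 + G f 1 3 2 + G f 2 1 3 = 0"
    using Z[of "Leaf 2" "Node [Leaf 1, Leaf 3]"] unfolding Delta_van[OF assms(1)]
    by (simp add: dsimps G_def algebra_simps del: delta.simps)
  have e4: "G f 2 3 1 + G f 3 1 2 + G f 3 2 1 = 0"
    using Z[of "Leaf 2" "Node [Leaf 3, Leaf 1]"] unfolding Delta_van[OF assms(1)]
    by (simp add: dsimps G_def algebra_simps del: delta.simps)
  have e5: "G f 1 2 3 + G f 1 3 2 + G f 3 1 2 = 0"
    using Z[of "Leaf 3" "Node [Leaf 1, Leaf 2]"] unfolding Delta_van[OF assms(1)]
    by (simp add: dsimps G_def algebra_simps del: delta.simps)
  have g1: "G f 1 2 3 = G f 3 2 1" using e1 e3 e4 e5 by algebra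
  have g2: "G f 2 1 3 = G f 3 1 2" using e1 e3 e4 e5 by algebra
  have g3: "G f 1 3 2 = - G f 3 1 2 - G f 3 2 1" using e1 e3 e4 e5 by algebra
  have g4: "G f 2 3 1 = - G f 3 1 2 - G f 3 2 1" using e1 e3 e4 e5 by algebra
  show ?thesis unfolding eqs3_def
    using g1 g2 g3 g4 unfolding G_def[of f 1 2 3] G_def[of f 2 1 3] G_def[of f 1 3 2] G_def[of f 2 3 1]
    by (auto simp: algebra_simps)
qed


lemma prim3_bwd: fixes f :: "'k::field vec" assumes v: "van f" and e: "eqs3 f"
  shows "primitive f"
proof -
  have D: "\<And>p. Delta f p = (\<Sum>t\<leftarrow>T3. f t * delta t p)" by (rule Delta_van[OF v])
  have r: "f (TC 1 2 3) = f (TL 3 2 1) + f (TR 3 2 1) + f (TC 3 2 1) - f (TL 1 2 3) - f (TR 1 2 3)"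
     "f (TC 2 1 3) = f (TL 3 1 2) + f (TR 3 1 2) + f (TC 3 1 2) - f (TL 2 1 3) - f (TR 2 1 3)"
     "f (TC 1 3 2) = - (f (TL 3 1 2) + f (TR 3 1 2) + f (TC 3 1 2)) - (f (TL 3 2 1) + f (TR 3 2 1) + f (TC 3 2 1)) - f (TL 1 3 2) - f (TR 1 3 2)"
     "f (TC 2 3 1) = - (f (TL 3 1 2) + f (TR 3 1 2) + f (TC 3 1 2)) - (f (TL 3 2 1) + f (TR 3 2 1) + f (TC 3 2 1)) - f (TL 2 3 1) - f (TR 2 3 1)"
    using e unfolding eqs3_def G_def by auto
  have Q1: "\<forall>t\<in>set T3. Delta f (t, One) = ten_one f (t, One) + one_ten f (t, One)"
    unfolding D by (simp add: dsimps ten_one_def one_ten_def r algebra_simps del: delta.simps One_nat_def)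
  have Q2: "\<forall>t\<in>set T3. Delta f (One, t) = ten_one f (One, t) + one_ten f (One, t)"
    unfolding D by (simp add: dsimps ten_one_def one_ten_def r algebra_simps del: delta.simps One_nat_def)
  have Q3: "\<forall>p\<in>{(Leaf 1, Node [Leaf 2, Leaf 3]), (Leaf 1, Node [Leaf 3, Leaf 2]), (Leaf 2, Node [Leaf 1, Leaf 3]), (Leaf 2, Node [Leaf 3, Leaf 1]), (Leaf 3, Node [Leaf 1, Leaf 2]), (Leaf 3, Node [Leaf 2, Leaf 1]), (Node [Leaf 1, Leaf 2], Leaf 3), (Node [Leaf 1, Leaf 3], Leaf 2), (Node [Leaf 2, Leaf 1], Leaf 3), (Node [Leaf 2, Leaf 3], Leaf 1), (Node [Leaf 3, Leaf 1], Leaf 2), (Node [Leaf 3, Leaf 2], Leaf 1)}. Delta f p = ten_one f p + one_ten f p"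
    unfolding D by (simp add: dsimps ten_one_def one_ten_def r algebra_simps del: delta.simps One_nat_def)
  have PP: "p \<notin> (\<lambda>t. (t, One)) ` set T3 \<union> (\<lambda>t. (One, t)) ` set T3 \<union> {(Leaf 1, Node [Leaf 2, Leaf 3]), (Leaf 1, Node [Leaf 3, Leaf 2]), (Leaf 2, Node [Leaf 1, Leaf 3]), (Leaf 2, Node [Leaf 3, Leaf 1]), (Leaf 3, Node [Leaf 1, Leaf 2]), (Leaf 3, Node [Leaf 2, Leaf 1]), (Node [Leaf 1, Leaf 2], Leaf 3), (Node [Leaf 1, Leaf 3], Leaf 2), (Node [Leaf 2, Leaf 1], Leaf 3), (Node [Leaf 2, Leaf 3], Leaf 1), (Node [Leaf 3, Leaf 1], Leaf 2), (Node [Leaf 3, Leaf 2], Leaf 1)} \<Longrightarrow> \<forall>t\<in>set T3. (delta t p :: 'k) = 0" for p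
    by (simp add: dsimps del: delta.simps One_nat_def)
  have diag: "\<forall>t\<in>set T3. (delta t (t, One) :: 'k) = 1 \<and> (delta t (One, t) :: 'k) = 1"
    by (simp add: dsimps del: delta.simps)
  show ?thesis unfolding primitive_def
  proof (rule ext)
    fix p
    show "Delta f p = (ten_one f + one_ten f) p"
    proof (cases "\<exists>t\<in>set T3. (delta t p :: 'k) \<noteq> 0")
      case True
      have "p \<in> (\<lambda>t. (t, One)) ` set T3 \<union> (\<lambda>t. (One, t)) ` set T3 \<union> {(Leaf 1, Node [Leaf 2, Leaf 3]), (Leaf 1, Node [Leaf 3, Leaf 2]), (Leaf 2, Node [Leaf 1, Leaf 3]), (Leaf 2, Node [Leaf 3, Leaf 1]), (Leaf 3, Node [Leaf 1, Leaf 2]), (Leaf 3, Node [Leaf 2, Leaf 1]), (Node [Leaf 1, Leaf 2], Leaf 3), (Node [Leaf 1, Leaf 3], Leaf 2), (Node [Leaf 2, Leaf 1], Leaf 3), (Node [Leaf 2, Leaf 3], Leaf 1), (Node [Leaf 3, Leaf 1], Leaf 2), (Node [Leaf 3, Leaf 2], Leaf 1)}" proof (rule ccontr)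
        assume "\<not> ?thesis"
        then have "\<forall>t\<in>set T3. (delta t p :: 'k) = 0" by (rule PP)
        then show False using True by auto
      qed
      then show ?thesis using Q1 Q2 Q3 by auto
    next
      case False
      obtain u w where p: "p = (u, w)" by fastforce
      have "Delta f p = 0" using False unfolding Delta_def
        by (intro sum.neutral) (auto simp: supp_def v[unfolded van_def])
      moreover have "ten_one f p = 0"
        using False diag v unfolding p ten_one_def van_def by (auto, metis one_neq_zero)
      moreover have "one_ten f p = 0"
        using False diag v unfolding p one_ten_def van_def by (auto, metis one_neq_zero)
      ultimately show ?thesis by simp
    qed
  qed
qed


definition Bv :: "mtree \<Rightarrow> 'k::field vec" where
  "Bv t = (\<lambda>u. if u = t then 1 else 0)"

lemma X_Bv: "X i = Bv (Leaf i)" by (simp add: X_def Bv_def fun_eq_iff)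

lemma supp_Bv[simp]: "supp (Bv t :: 'k::field vec) = {t}" by (auto simp: supp_def Bv_def)

lemma listset_sing: "listset (map (\<lambda>t. {t}) ts) = {ts}"
  by (induction ts) (auto simp: set_Cons_def)

lemma mgraft_Bv: "mgraft (map Bv ts) = (Bv (graft ts) :: 'k::field vec)"
proof (rule ext)
  fix u
  have pr: "prod_list (map2 (\<lambda>w a. w a) (map (Bv :: mtree \<Rightarrow> 'k vec) ts) ts) = 1"
    by (induction ts) (auto simp: Bv_def)
  have m: "map supp (map (Bv :: mtree \<Rightarrow> 'k vec) ts) = map (\<lambda>t. {t}) ts" by (induction ts) auto
  have "mgraft (map Bv ts) u = (\<Sum>as\<in>{ts}. if graft as = u then prod_list (map2 (\<lambda>w a. w a) (map (Bv :: mtree \<Rightarrow> 'k vec) ts) as) else 0)"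
    unfolding mgraft_def m listset_sing ..
  also have "\<dots> = (if graft ts = u then 1 else 0)" using pr by simp
  also have "\<dots> = (Bv (graft ts) :: 'k vec) u" by (auto simp: Bv_def)
  finally show "mgraft (map Bv ts) u = (Bv (graft ts) :: 'k vec) u" .
qed

lemma mul_Bv: "mul (Bv a) (Bv b) = (Bv (graft [a, b]) :: 'k::field vec)"
  using mgraft_Bv[of "[a,b]"] by (simp add: mul_def)

lemma vee3_Bv: "vee3 (Bv a) (Bv b) (Bv c) = (Bv (graft [a, b, c]) :: 'k::field vec)"
  using mgraft_Bv[of "[a,b,c]"] by (simp add: vee3_def)

lemma listset2: "listset [A, B] = (\<lambda>(x,y). [x,y]) ` (A \<times> B)"
  by (auto simp: set_Cons_def)

lemma fdiff_apply: "(f - g) x = f x - (g x :: 'a::minus)" by simp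

lemma if_diff0: "(if c then a - b else 0) = (if c then a else 0) - (if c then b else (0::'a::group_add))"
  by simp

lemma mul_expand:
  fixes f g :: "'k::field vec"
  assumes "finite S" "finite T" "supp f \<subseteq> S" "supp g \<subseteq> T"
  shows "mul f g u = (\<Sum>x\<in>S. \<Sum>y\<in>T. if graft [x, y] = u then f x * g y else 0)"
proof -
  have fs: "finite (supp f)" "finite (supp g)" using assms finite_subset by auto
  have "mul f g u = (\<Sum>as\<in>listset [supp f, supp g].
          if graft as = u then prod_list (map2 (\<lambda>w a. w a) [f, g] as) else 0)"
    by (simp add: mul_def mgraft_def)
  also have "\<dots> = (\<Sum>(x,y)\<in>supp f \<times> supp g. if graft [x,y] = u then f x * g y else 0)"
    unfolding listset2 by (subst sum.reindex) (auto simp: inj_on_def intro!: sum.cong)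
  also have "\<dots> = (\<Sum>x\<in>supp f. \<Sum>y\<in>supp g. if graft [x,y] = u then f x * g y else 0)"
    by (simp add: sum.cartesian_product)
  also have "\<dots> = (\<Sum>x\<in>S. \<Sum>y\<in>supp g. if graft [x,y] = u then f x * g y else 0)"
    using assms by (intro sum.mono_neutral_left) (auto simp: supp_def intro!: sum.neutral split: if_split_asm)
  also have "\<dots> = (\<Sum>x\<in>S. \<Sum>y\<in>T. if graft [x,y] = u then f x * g y else 0)"
    using assms by (intro sum.cong refl sum.mono_neutral_left) (auto simp: supp_def)
  finally show ?thesis .
qed

lemma supp_diff: "supp (f - g :: 'k::field vec) \<subseteq> supp f \<union> supp g"
  by (auto simp: supp_def)

lemma mul_diff_left:
  fixes f1 f2 g :: "'k::field vec"
  assumes "finite (supp f1)" "finite (supp f2)" "finite (supp g)"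
  shows "mul (f1 - f2) g = mul f1 g - mul f2 g"
proof (rule ext)
  fix u
  let ?S = "supp f1 \<union> supp f2" and ?T = "supp g"
  have "mul (f1 - f2) g u = (\<Sum>x\<in>?S. \<Sum>y\<in>?T. if graft [x, y] = u then (f1 - f2) x * g y else 0)"
    using assms supp_diff[of f1 f2] by (intro mul_expand) auto
  moreover have "mul f1 g u = (\<Sum>x\<in>?S. \<Sum>y\<in>?T. if graft [x, y] = u then f1 x * g y else 0)"
    using assms by (intro mul_expand) auto
  moreover have "mul f2 g u = (\<Sum>x\<in>?S. \<Sum>y\<in>?T. if graft [x, y] = u then f2 x * g y else 0)"
    using assms by (intro mul_expand) auto
  ultimately show "mul (f1 - f2) g u = (mul f1 g - mul f2 g) u"
    by (simp only: fdiff_apply left_diff_distrib if_diff0 sum_subtractf)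
qed

lemma mul_diff_right:
  fixes f1 f2 g :: "'k::field vec"
  assumes "finite (supp f1)" "finite (supp f2)" "finite (supp g)"
  shows "mul g (f1 - f2) = mul g f1 - mul g f2"
proof (rule ext)
  fix u
  let ?S = "supp f1 \<union> supp f2" and ?T = "supp g"
  have "mul g (f1 - f2) u = (\<Sum>y\<in>?T. \<Sum>x\<in>?S. if graft [y, x] = u then g y * (f1 - f2) x else 0)"
    using assms supp_diff[of f1 f2] by (intro mul_expand) auto
  moreover have "mul g f1 u = (\<Sum>y\<in>?T. \<Sum>x\<in>?S. if graft [y, x] = u then g y * f1 x else 0)"
    using assms by (intro mul_expand) auto
  moreover have "mul g f2 u = (\<Sum>y\<in>?T. \<Sum>x\<in>?S. if graft [y, x] = u then g y * f2 x else 0)"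
    using assms by (intro mul_expand) auto
  ultimately show "mul g (f1 - f2) u = (mul g f1 - mul g f2) u"
    by (simp only: fdiff_apply right_diff_distrib if_diff0 sum_subtractf)
qed

lemma brX: "bracket (X a) (X b) = (Bv (Node [Leaf a, Leaf b]) - Bv (Node [Leaf b, Leaf a]) :: 'k::field vec)"
  by (simp add: bracket_def X_Bv mul_Bv graft_def)

lemma brbrX: "bracket (bracket (X a) (X b)) (X c) =
  (Bv (TL a b c) - Bv (TL b a c) - Bv (TR c a b) + Bv (TR c b a) :: 'k::field vec)"
proof -
  have f: "finite (supp (Bv t :: 'k vec))" for t by simp
  have "bracket (bracket (X a) (X b)) (X c) =
     mul (Bv (Node [Leaf a, Leaf b]) - Bv (Node [Leaf b, Leaf a])) (Bv (Leaf c)) -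
     mul (Bv (Leaf c)) (Bv (Node [Leaf a, Leaf b]) - Bv (Node [Leaf b, Leaf a]) :: 'k vec)"
    unfolding brX unfolding bracket_def X_Bv ..
  also have "\<dots> = (mul (Bv (Node [Leaf a, Leaf b])) (Bv (Leaf c)) - mul (Bv (Node [Leaf b, Leaf a])) (Bv (Leaf c))) -
     (mul (Bv (Leaf c)) (Bv (Node [Leaf a, Leaf b])) - mul (Bv (Leaf c)) (Bv (Node [Leaf b, Leaf a])))"
    by (simp only: mul_diff_left[OF f f f] mul_diff_right[OF f f f])
  also have "\<dots> = Bv (TL a b c) - Bv (TL b a c) - Bv (TR c a b) + Bv (TR c b a)"
    by (simp only: mul_Bv) (simp add: graft_def)
  finally show ?thesis .
qed

lemma assoc_bX: "assoc_b (X a) (X b) (X c) = (Bv (TL a b c) - Bv (TR a b c) :: 'k::field vec)"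
  by (simp add: assoc_b_def X_Bv mul_Bv graft_def)

lemma assoc_tX: "assoc_t (X a) (X b) (X c) = (Bv (TL a b c) - Bv (TC a b c) :: 'k::field vec)"
  by (simp add: assoc_t_def X_Bv mul_Bv vee3_Bv graft_def)


lemma act_comp: "bij p \<Longrightarrow> bij q \<Longrightarrow> act (p \<circ> q) f = act p (act q f)"
  by (simp add: act_def o_inv_distrib relabel_comp fun_eq_iff)

lemma act_id: "act id f = f"
  by (simp add: act_def relabel_id)

lemma act_tr: "act (Transposition.transpose a b) f = (\<lambda>t. f (relabel (Transposition.transpose a b) t))"
  by (simp add: act_def)

lemma mset123: "mset [1,2,3::nat] = mset_set {1,2,3}" by simp

lemma image_mset_perm: assumes "\<sigma> permutes {1,2,3::nat}" shows "image_mset \<sigma> (mset [1,2,3]) = mset [1,2,3]"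
proof -
  have i: "inj_on \<sigma> {1,2,3}" using assms by (rule permutes_inj_on)
  show ?thesis unfolding mset123 image_mset_mset_set[OF i] permutes_image[OF assms] ..
qed

lemma mset_perm_iff:
  assumes "\<sigma> permutes {1,2,3::nat}"
  shows "image_mset \<sigma> M = mset [1,2,3] \<longleftrightarrow> M = mset [1,2,3]"
proof
  assume h: "image_mset \<sigma> M = mset [1,2,3]"
  have "M = image_mset (inv \<sigma>) (image_mset \<sigma> M)"
    by (simp add: multiset.map_comp permutes_inv_o(2)[OF assms])
  also have "\<dots> = mset [1,2,3]" unfolding h by (rule image_mset_perm[OF permutes_inv[OF assms]])
  finally show "M = mset [1,2,3]" .
next
  assume "M = mset [1,2,3]"
  then show "image_mset \<sigma> M = mset [1,2,3]" using image_mset_perm[OF assms] by simp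
qed

lemma relabel_T3: "\<sigma> permutes {1,2,3} \<Longrightarrow> relabel \<sigma> t \<in> set T3 \<longleftrightarrow> t \<in> set T3"
  unfolding T3_char[symmetric] proper_relabel leaves_relabel mset_map
  by (simp only: mset_perm_iff)

lemma van_act: "\<sigma> permutes {1,2,3} \<Longrightarrow> van f \<Longrightarrow> van (act \<sigma> f)"
  unfolding van_def act_def using relabel_T3[OF permutes_inv] by blast

lemma van_add: "van f \<Longrightarrow> van g \<Longrightarrow> van (f + g)" by (simp add: van_def)
lemma van_diff: "van f \<Longrightarrow> van g \<Longrightarrow> van (f - g)" by (simp add: van_def)
lemma van_sc: "van f \<Longrightarrow> van (sc c f)" by (simp add: van_def sc_def)
lemma van_zero: "van 0" by (simp add: van_def)
lemma van_Bv: "t \<in> set T3 \<Longrightarrow> van (Bv t)" by (auto simp: van_def Bv_def)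

lemma eq_T3: "van f \<Longrightarrow> van g \<Longrightarrow> (\<forall>t\<in>set T3. f t = g t) \<Longrightarrow> f = g"
  by (auto simp: van_def fun_eq_iff)

definition mkv :: "'k list \<Rightarrow> 'k::field vec" where
  "mkv cs = (\<lambda>t. case map_of (zip T3 cs) t of None \<Rightarrow> 0 | Some c \<Rightarrow> c)"

lemma van_mkv: "van (mkv cs)"
proof -
  have "t \<notin> set T3 \<Longrightarrow> map_of (zip T3 cs) t = None" for t
    by (meson in_set_zipE map_of_SomeD not_None_eq)
  then show ?thesis by (simp add: van_def mkv_def)
qed

interpretation VS: vector_space "sc :: 'k::field \<Rightarrow> 'k vec \<Rightarrow> 'k vec"
  by unfold_locales (auto simp: sc_def fun_eq_iff algebra_simps)

lemma prim_id2: "bracket (bracket (X 2) (X 1)) (X 3) = - (bracket (bracket (X 1) (X 2)) (X 3) :: 'k::field vec)"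
  by (simp add: brbrX algebra_simps)

lemma prim_id3:
  "(bracket (bracket (X 1) (X 2)) (X 3) + bracket (bracket (X 3) (X 1)) (X 2)
           + bracket (bracket (X 2) (X 3)) (X 1) :: 'k::field vec)
         = assoc_b (X 1) (X 2) (X 3) - assoc_b (X 2) (X 1) (X 3) + assoc_b (X 3) (X 1) (X 2)
           - assoc_b (X 1) (X 3) (X 2) + assoc_b (X 2) (X 3) (X 1) - assoc_b (X 3) (X 2) (X 1)"
  by (simp add: brbrX assoc_bX algebra_simps)


abbreviation Rs :: "'k::field rep list" where
  "Rs \<equiv> [V_triv, V_triv, V_std, V_std, V_std, V_std, V_std, V_sign, V_sign]"

definition psi :: "(nat \<Rightarrow> nat \<Rightarrow> 'k::field) \<Rightarrow> 'k vec" where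
  "psi w = mkv [w 0 0 + w 1 0 + w 2 1 + w 3 2 + w 4 1 + w 5 2 - w 6 1 + w 6 2 + w 7 0 + w 8 0,
    - w 0 0 - w 2 1 - w 3 2 + w 6 2 - w 6 3 - w 7 0,
    - w 1 0 - w 4 1 - w 5 2 - w 8 0,
    w 0 0 + w 1 0 + w 2 1 + w 3 3 + w 4 1 + w 5 3 - w 6 1 + w 6 3 - w 7 0 - w 8 0,
    - w 0 0 - w 2 1 - w 3 3 - w 6 2 + w 6 3 + w 7 0,
    - w 1 0 - w 4 1 - w 5 3 + w 8 0,
    w 0 0 + w 1 0 + w 2 2 + w 3 1 + w 4 2 + w 5 1 + w 6 1 - w 6 2 - w 7 0 - w 8 0,
    - w 0 0 - w 2 2 - w 3 1 + w 6 1 - w 6 3 + w 7 0,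
    - w 1 0 - w 4 2 - w 5 1 + w 8 0,
    w 0 0 + w 1 0 + w 2 2 + w 3 3 + w 4 2 + w 5 3 - w 6 2 + w 6 3 + w 7 0 + w 8 0,
    - w 0 0 - w 2 2 - w 3 3 - w 6 1 + w 6 3 - w 7 0,
    - w 1 0 - w 4 2 - w 5 3 - w 8 0,
    w 0 0 + w 1 0 + w 2 3 + w 3 1 + w 4 3 + w 5 1 + w 6 1 - w 6 3 + w 7 0 + w 8 0,
    - w 0 0 - w 2 3 - w 3 1 + w 6 1 - w 6 2 - w 7 0,
    - w 1 0 - w 4 3 - w 5 1 - w 8 0,
    w 0 0 + w 1 0 + w 2 3 + w 3 2 + w 4 3 + w 5 2 + w 6 2 - w 6 3 - w 7 0 - w 8 0,
    - w 0 0 - w 2 3 - w 3 2 - w 6 1 + w 6 2 + w 7 0,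
    - w 1 0 - w 4 3 - w 5 2 + w 8 0]"

definition phi :: "'k::field_char_0 vec \<Rightarrow> nat \<Rightarrow> nat \<Rightarrow> 'k" where
  "phi f = (\<lambda>j i. if j = 0 then (if i = 0 then ((- f (TR 1 2 3) - f (TR 1 3 2) - f (TR 2 1 3) - f (TR 2 3 1) - f (TR 3 1 2) - f (TR 3 2 1)) / 6) else 0)
     else if j = 1 then (if i = 0 then ((f (TL 1 2 3) + f (TR 1 2 3) + f (TL 1 3 2) + f (TR 1 3 2) + f (TL 2 1 3) + f (TR 2 1 3) + f (TL 2 3 1) + f (TR 2 3 1) + f (TL 3 1 2) + f (TR 3 1 2) + f (TL 3 2 1) + f (TR 3 2 1)) / 6) else 0)
     else if j = 2 then (if i = 1 then ((- f (TR 1 2 3) - f (TR 1 3 2) + f (TR 2 3 1) + f (TL 3 1 2) + f (TR 3 1 2) + f (TC 3 1 2) + f (TR 3 2 1)) / 3) else if i = 2 then ((f (TR 1 3 2) - f (TR 2 1 3) - f (TR 2 3 1) + f (TR 3 1 2) + f (TL 3 2 1) + f (TR 3 2 1) + f (TC 3 2 1)) / 3) else if i = 3 then - ((- f (TR 1 2 3) - f (TR 1 3 2) + f (TR 2 3 1) + f (TL 3 1 2) + f (TR 3 1 2) + f (TC 3 1 2) + f (TR 3 2 1)) / 3) - ((f (TR 1 3 2) - f (TR 2 1 3) - f (TR 2 3 1) + f (TR 3 1 2) + f (TL 3 2 1) + f (TR 3 2 1) + f (TC 3 2 1)) / 3) else 0)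
     else if j = 3 then (if i = 1 then ((- f (TR 2 1 3) + f (TR 2 3 1) + 2 * f (TL 3 1 2) + f (TR 3 1 2) + 2 * f (TC 3 1 2) + f (TR 3 2 1)) / 3) else if i = 2 then ((- f (TR 1 2 3) + f (TR 1 3 2) + f (TR 3 1 2) + 2 * f (TL 3 2 1) + f (TR 3 2 1) + 2 * f (TC 3 2 1)) / 3) else if i = 3 then - ((- f (TR 2 1 3) + f (TR 2 3 1) + 2 * f (TL 3 1 2) + f (TR 3 1 2) + 2 * f (TC 3 1 2) + f (TR 3 2 1)) / 3) - ((- f (TR 1 2 3) + f (TR 1 3 2) + f (TR 3 1 2) + 2 * f (TL 3 2 1) + f (TR 3 2 1) + 2 * f (TC 3 2 1)) / 3) else 0)
     else if j = 4 then (if i = 1 then ((f (TL 1 2 3) + f (TR 1 2 3) + f (TL 1 3 2) + f (TR 1 3 2) - f (TL 2 3 1) - f (TR 2 3 1) - f (TL 3 2 1) - f (TR 3 2 1)) / 3) else if i = 2 then ((- f (TL 1 3 2) - f (TR 1 3 2) + f (TL 2 1 3) + f (TR 2 1 3) + f (TL 2 3 1) + f (TR 2 3 1) - f (TL 3 1 2) - f (TR 3 1 2)) / 3) else if i = 3 then - ((f (TL 1 2 3) + f (TR 1 2 3) + f (TL 1 3 2) + f (TR 1 3 2) - f (TL 2 3 1) - f (TR 2 3 1) - f (TL 3 2 1) - f (TR 3 2 1)) / 3) - ((- f (TL 1 3 2) - f (TR 1 3 2) + f (TL 2 1 3) + f (TR 2 1 3) + f (TL 2 3 1) + f (TR 2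 3 1) - f (TL 3 1 2) - f (TR 3 1 2)) / 3) else 0)
     else if j = 5 then (if i = 1 then ((f (TL 2 1 3) + f (TR 2 1 3) - f (TL 2 3 1) - f (TR 2 3 1) - 2 * f (TL 3 1 2) - 2 * f (TR 3 1 2) - 3 * f (TC 3 1 2) - f (TL 3 2 1) - f (TR 3 2 1)) / 3) else if i = 2 then ((f (TL 1 2 3) + f (TR 1 2 3) - f (TL 1 3 2) - f (TR 1 3 2) - f (TL 3 1 2) - f (TR 3 1 2) - 2 * f (TL 3 2 1) - 2 * f (TR 3 2 1) - 3 * f (TC 3 2 1)) / 3) else if i = 3 then - ((f (TL 2 1 3) + f (TR 2 1 3) - f (TL 2 3 1) - f (TR 2 3 1) - 2 * f (TL 3 1 2) - 2 * f (TR 3 1 2) - 3 * f (TC 3 1 2) - f (TL 3 2 1) - f (TR 3 2 1)) / 3) - ((f (TL 1 2 3) + f (TR 1 2 3) - f (TL 1 3 2) - f (TR 1 3 2) - f (TL 3 1 2) - f (TR 3 1 2) - 2 * f (TL 3 2 1) - 2 * f (TR 3 2 1) - 3 * f (TC 3 2 1)) / 3) else 0)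
     else if j = 6 then (if i = 1 then ((f (TL 3 1 2) + f (TR 3 1 2) + f (TC 3 1 2)) / 3) else if i = 2 then ((f (TL 3 2 1) + f (TR 3 2 1) + f (TC 3 2 1)) / 3) else if i = 3 then - ((f (TL 3 1 2) + f (TR 3 1 2) + f (TC 3 1 2)) / 3) - ((f (TL 3 2 1) + f (TR 3 2 1) + f (TC 3 2 1)) / 3) else 0)
     else if j = 7 then (if i = 0 then ((- f (TR 1 2 3) + f (TR 1 3 2) + f (TR 2 1 3) - f (TR 2 3 1) - f (TR 3 1 2) + f (TR 3 2 1)) / 6) else 0)
     else if j = 8 then (if i = 0 then ((f (TL 1 2 3) + f (TR 1 2 3) - f (TL 1 3 2) - f (TR 1 3 2) - f (TL 2 1 3) - f (TR 2 1 3) + f (TL 2 3 1) + f (TR 2 3 1) + f (TL 3 1 2) + f (TR 3 1 2) - f (TL 3 2 1) - f (TR 3 2 1)) / 6) else 0)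
     else 0)"

lemma van_psi: "van (psi w)" by (simp add: psi_def van_mkv)

lemma psi_eqs: "eqs3 (psi w)"
  by (simp add: eqs3_def G_def psi_def mkv_def T3_def algebra_simps del: One_nat_def)

lemma less9: "(j::nat) < 9 \<Longrightarrow> j = 0 \<or> j = 1 \<or> j = 2 \<or> j = 3 \<or> j = 4 \<or> j = 5 \<or> j = 6 \<or> j = 7 \<or> j = 8"
  by arith

lemma all_less9: "(\<forall>j<(9::nat). P j) \<longleftrightarrow> P 0 \<and> P 1 \<and> P 2 \<and> P 3 \<and> P 4 \<and> P 5 \<and> P 6 \<and> P 7 \<and> P 8"
  using less9 by (auto simp del: One_nat_def)

lemma len_Rs: "length (Rs :: 'k::field rep list) = 9" by simp

lemma carrier_iff: "w \<in> dsum_carrier Rs \<longleftrightarrow>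
   (\<forall>i. i \<noteq> 0 \<longrightarrow> w 0 i = 0) \<and> (\<forall>i. i \<noteq> 0 \<longrightarrow> w 1 i = 0) \<and>
   (\<forall>i. i \<notin> {1,2,3} \<longrightarrow> w 2 i = 0) \<and> w 2 1 + w 2 2 + w 2 3 = 0 \<and>
   (\<forall>i. i \<notin> {1,2,3} \<longrightarrow> w 3 i = 0) \<and> w 3 1 + w 3 2 + w 3 3 = 0 \<and>
   (\<forall>i. i \<notin> {1,2,3} \<longrightarrow> w 4 i = 0) \<and> w 4 1 + w 4 2 + w 4 3 = 0 \<and>
   (\<forall>i. i \<notin> {1,2,3} \<longrightarrow> w 5 i = 0) \<and> w 5 1 + w 5 2 + w 5 3 = 0 \<and>
   (\<forall>i. i \<notin> {1,2,3} \<longrightarrow> w 6 i = 0) \<and> w 6 1 + w 6 2 + w 6 3 = 0 \<and>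
   (\<forall>i. i \<noteq> 0 \<longrightarrow> w 7 i = 0) \<and> (\<forall>i. i \<noteq> 0 \<longrightarrow> w 8 i = 0) \<and>
   (\<forall>j\<ge>9. w j = 0)"
  unfolding dsum_carrier_def len_Rs all_less9
  by (simp add:  V_triv_def V_std_def V_sign_def del: One_nat_def)

lemma phi_carrier: "phi f \<in> dsum_carrier Rs"
  unfolding carrier_iff by (simp add: phi_def fun_eq_iff del: One_nat_def)

lemma psi_phi: assumes v: "van f" and e: "eqs3 f" shows "psi (phi f) = f"
proof -
  have r: "f (TC 1 2 3) = f (TL 3 2 1) + f (TR 3 2 1) + f (TC 3 2 1) - f (TL 1 2 3) - f (TR 1 2 3)"
     "f (TC 2 1 3) = f (TL 3 1 2) + f (TR 3 1 2) + f (TC 3 1 2) - f (TL 2 1 3) - f (TR 2 1 3)"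
     "f (TC 1 3 2) = - (f (TL 3 1 2) + f (TR 3 1 2) + f (TC 3 1 2)) - (f (TL 3 2 1) + f (TR 3 2 1) + f (TC 3 2 1)) - f (TL 1 3 2) - f (TR 1 3 2)"
     "f (TC 2 3 1) = - (f (TL 3 1 2) + f (TR 3 1 2) + f (TC 3 1 2)) - (f (TL 3 2 1) + f (TR 3 2 1) + f (TC 3 2 1)) - f (TL 2 3 1) - f (TR 2 3 1)"
    using e unfolding eqs3_def G_def by auto
  show ?thesis
    by (rule eq_T3[OF van_psi v]) (simp add: psi_def mkv_def T3_def phi_def r field_simps del: One_nat_def)
qed

lemma psi_add: "psi (w + w') = psi w + psi w'"
  by (rule eq_T3[OF van_psi van_add[OF van_psi van_psi]])
     (simp add: psi_def mkv_def T3_def algebra_simps del: One_nat_def)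

lemma psi_scale: "psi (\<lambda>j i. c * w j i) = sc c (psi w)"
  by (rule eq_T3[OF van_psi van_sc[OF van_psi]])
     (simp add: psi_def mkv_def T3_def sc_def algebra_simps del: One_nat_def)


lemma psi_at0: "psi w (TL 1 2 3) = w 0 0 + w 1 0 + w 2 1 + w 3 2 + w 4 1 + w 5 2 - w 6 1 + w 6 2 + w 7 0 + w 8 0"
  by (simp add: psi_def mkv_def T3_def del: One_nat_def)

lemma psi_at1: "psi w (TR 1 2 3) = - w 0 0 - w 2 1 - w 3 2 + w 6 2 - w 6 3 - w 7 0"
  by (simp add: psi_def mkv_def T3_def del: One_nat_def)

lemma psi_at2: "psi w (TC 1 2 3) = - w 1 0 - w 4 1 - w 5 2 - w 8 0"
  by (simp add: psi_def mkv_def T3_def del: One_nat_def)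

lemma psi_at3: "psi w (TL 1 3 2) = w 0 0 + w 1 0 + w 2 1 + w 3 3 + w 4 1 + w 5 3 - w 6 1 + w 6 3 - w 7 0 - w 8 0"
  by (simp add: psi_def mkv_def T3_def del: One_nat_def)

lemma psi_at4: "psi w (TR 1 3 2) = - w 0 0 - w 2 1 - w 3 3 - w 6 2 + w 6 3 + w 7 0"
  by (simp add: psi_def mkv_def T3_def del: One_nat_def)

lemma psi_at5: "psi w (TC 1 3 2) = - w 1 0 - w 4 1 - w 5 3 + w 8 0"
  by (simp add: psi_def mkv_def T3_def del: One_nat_def)

lemma psi_at6: "psi w (TL 2 1 3) = w 0 0 + w 1 0 + w 2 2 + w 3 1 + w 4 2 + w 5 1 + w 6 1 - w 6 2 - w 7 0 - w 8 0"
  by (simp add: psi_def mkv_def T3_def del: One_nat_def)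

lemma psi_at7: "psi w (TR 2 1 3) = - w 0 0 - w 2 2 - w 3 1 + w 6 1 - w 6 3 + w 7 0"
  by (simp add: psi_def mkv_def T3_def del: One_nat_def)

lemma psi_at8: "psi w (TC 2 1 3) = - w 1 0 - w 4 2 - w 5 1 + w 8 0"
  by (simp add: psi_def mkv_def T3_def del: One_nat_def)

lemma psi_at9: "psi w (TL 2 3 1) = w 0 0 + w 1 0 + w 2 2 + w 3 3 + w 4 2 + w 5 3 - w 6 2 + w 6 3 + w 7 0 + w 8 0"
  by (simp add: psi_def mkv_def T3_def del: One_nat_def)

lemma psi_at10: "psi w (TR 2 3 1) = - w 0 0 - w 2 2 - w 3 3 - w 6 1 + w 6 3 - w 7 0"
  by (simp add: psi_def mkv_def T3_def del: One_nat_def)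

lemma psi_at11: "psi w (TC 2 3 1) = - w 1 0 - w 4 2 - w 5 3 - w 8 0"
  by (simp add: psi_def mkv_def T3_def del: One_nat_def)

lemma psi_at12: "psi w (TL 3 1 2) = w 0 0 + w 1 0 + w 2 3 + w 3 1 + w 4 3 + w 5 1 + w 6 1 - w 6 3 + w 7 0 + w 8 0"
  by (simp add: psi_def mkv_def T3_def del: One_nat_def)

lemma psi_at13: "psi w (TR 3 1 2) = - w 0 0 - w 2 3 - w 3 1 + w 6 1 - w 6 2 - w 7 0"
  by (simp add: psi_def mkv_def T3_def del: One_nat_def)

lemma psi_at14: "psi w (TC 3 1 2) = - w 1 0 - w 4 3 - w 5 1 - w 8 0"
  by (simp add: psi_def mkv_def T3_def del: One_nat_def)

lemma psi_at15: "psi w (TL 3 2 1) = w 0 0 + w 1 0 + w 2 3 + w 3 2 + w 4 3 + w 5 2 + w 6 2 - w 6 3 - w 7 0 - w 8 0"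
  by (simp add: psi_def mkv_def T3_def del: One_nat_def)

lemma psi_at16: "psi w (TR 3 2 1) = - w 0 0 - w 2 3 - w 3 2 - w 6 1 + w 6 2 + w 7 0"
  by (simp add: psi_def mkv_def T3_def del: One_nat_def)

lemma psi_at17: "psi w (TC 3 2 1) = - w 1 0 - w 4 3 - w 5 2 + w 8 0"
  by (simp add: psi_def mkv_def T3_def del: One_nat_def)

lemmas psi_at = psi_at0 psi_at1 psi_at2 psi_at3 psi_at4 psi_at5 psi_at6 psi_at7 psi_at8 psi_at9 psi_at10 psi_at11 psi_at12 psi_at13 psi_at14 psi_at15 psi_at16 psi_at17

lemma da0: "dsum_act Rs \<sigma> w 0 = w 0" by (simp add: dsum_act_def V_triv_def)
lemma da1: "dsum_act Rs \<sigma> w 1 = w 1" by (simp add: dsum_act_def V_triv_def)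
lemma da2: "dsum_act Rs \<sigma> w 2 = w 2 \<circ> inv \<sigma>" by (simp add: dsum_act_def V_std_def)
lemma da3: "dsum_act Rs \<sigma> w 3 = w 3 \<circ> inv \<sigma>" by (simp add: dsum_act_def V_std_def)
lemma da4: "dsum_act Rs \<sigma> w 4 = w 4 \<circ> inv \<sigma>" by (simp add: dsum_act_def V_std_def)
lemma da5: "dsum_act Rs \<sigma> w 5 = w 5 \<circ> inv \<sigma>" by (simp add: dsum_act_def V_std_def)
lemma da6: "dsum_act Rs \<sigma> w 6 = w 6 \<circ> inv \<sigma>" by (simp add: dsum_act_def V_std_def)
lemma da7: "dsum_act Rs \<sigma> w 7 = (\<lambda>i. of_int (sign \<sigma>) * w 7 i)" by (simp add: dsum_act_def V_sign_def)
lemma da8: "dsum_act Rs \<sigma> w 8 = (\<lambda>i. of_int (sign \<sigma>) * w 8 i)" by (simp add: dsum_act_def V_sign_def)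
lemmas da = da0 da1 da2 da3 da4 da5 da6 da7 da8

lemma psi_t12: "act (Transposition.transpose 1 2) (psi w) = psi (dsum_act Rs (Transposition.transpose 1 2) w)"
proof -
  have vl: "van (act (Transposition.transpose 1 2) (psi w))" by (intro van_act permutes_swap_id van_psi) auto
  have main: "\<forall>t\<in>set T3. act (Transposition.transpose 1 2) (psi w) t = psi (dsum_act Rs (Transposition.transpose 1 2) w) t"
    unfolding T3_def by (simp add: act_tr psi_at da sign_swap_id algebra_simps del: One_nat_def)
  show ?thesis by (rule eq_T3[OF vl van_psi main])
qed

lemma psi_t13: "act (Transposition.transpose 1 3) (psi w) = psi (dsum_act Rs (Transposition.transpose 1 3) w)"
proof -
  have vl: "van (act (Transposition.transpose 1 3) (psi w))" by (intro van_act permutes_swap_id van_psi) auto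
  have main: "\<forall>t\<in>set T3. act (Transposition.transpose 1 3) (psi w) t = psi (dsum_act Rs (Transposition.transpose 1 3) w) t"
    unfolding T3_def by (simp add: act_tr psi_at da sign_swap_id algebra_simps del: One_nat_def)
  show ?thesis by (rule eq_T3[OF vl van_psi main])
qed

lemma psi_t23: "act (Transposition.transpose 2 3) (psi w) = psi (dsum_act Rs (Transposition.transpose 2 3) w)"
proof -
  have vl: "van (act (Transposition.transpose 2 3) (psi w))" by (intro van_act permutes_swap_id van_psi) auto
  have main: "\<forall>t\<in>set T3. act (Transposition.transpose 2 3) (psi w) t = psi (dsum_act Rs (Transposition.transpose 2 3) w) t"
    unfolding T3_def by (simp add: act_tr psi_at da sign_swap_id algebra_simps del: One_nat_def)
  show ?thesis by (rule eq_T3[OF vl van_psi main])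
qed


lemma psi_trg: assumes "a \<in> {1,2,3}" "b \<in> {1,2,3}" "a \<noteq> b"
  shows "act (Transposition.transpose a b) (psi w) = psi (dsum_act Rs (Transposition.transpose a b) w)"
proof -
  have c: "Transposition.transpose 2 1 = Transposition.transpose (1::nat) 2"
     "Transposition.transpose 3 1 = Transposition.transpose (1::nat) 3"
     "Transposition.transpose 3 2 = Transposition.transpose (2::nat) 3"
    by (simp_all add: transpose_commute)
  from assms show ?thesis
    by (auto simp: c psi_t12 psi_t13 psi_t23 simp del: One_nat_def)
qed

lemma psi_id: "psi (dsum_act Rs id w) = psi w"
  by (simp add: psi_def da del: One_nat_def)

lemma perm_fin: "p permutes {1,2,3::nat} \<Longrightarrow> permutation p"
  by (rule permutes_imp_permutation) auto

lemma dsum_act_comp: assumes "permutation p" "permutation q"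
  shows "dsum_act Rs (p \<circ> q) w = dsum_act Rs p (dsum_act Rs q (w :: nat \<Rightarrow> nat \<Rightarrow> 'k::field))"
proof (rule ext)
  fix j
  have bp: "bij p" "bij q" using assms by (simp_all add: permutation_bijective)
  show "dsum_act Rs (p \<circ> q) w j = dsum_act Rs p (dsum_act Rs q w) j"
  proof (cases "j < 9")
    case True
    then show ?thesis using less9[OF True]
      by (auto simp: da o_inv_distrib[OF bp] sign_compose[OF assms] fun_eq_iff simp del: One_nat_def)
  next
    case False
    then show ?thesis by (simp add: dsum_act_def)
  qed
qed

lemma fin123: "finite {1,2,3::nat}" by simp

lemma psi_equiv: assumes "\<sigma> permutes {1,2,3}"
  shows "act \<sigma> (psi w) = psi (dsum_act Rs \<sigma> w)"
  using assms fin123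
proof (induction \<sigma> arbitrary: w rule: permutes_induct)
  case id
  show ?case by (simp only: act_id psi_id)
next
  case (swap a b p)
  have pp: "permutation p" using swap.hyps(4) by (rule perm_fin)
  have pt: "permutation (Transposition.transpose a (b::nat))" by (rule permutation_swap_id)
  have "act (Transposition.transpose a b \<circ> p) (psi w) = act (Transposition.transpose a b) (act p (psi w))"
    using pp by (intro act_comp) (auto simp: permutation_bijective)
  also have "\<dots> = act (Transposition.transpose a b) (psi (dsum_act Rs p w))" using swap.IH by simp
  also have "\<dots> = psi (dsum_act Rs (Transposition.transpose a b) (dsum_act Rs p w))"
    using swap.hyps by (intro psi_trg) auto
  also have "\<dots> = psi (dsum_act Rs (Transposition.transpose a b \<circ> p) w)"
    by (simp add: dsum_act_comp[OF pt pp])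
  finally show ?case .
qed

lemma sum3: "a1 + a2 + a3 = 0 \<Longrightarrow> b1 + b2 + b3 = 0 \<Longrightarrow> (a1 + b1) + (a2 + b2) + (a3 + b3) = (0::'a::ab_group_add)"
proof -
  assume "a1 + a2 + a3 = 0" "b1 + b2 + b3 = 0"
  moreover have "(a1 + b1) + (a2 + b2) + (a3 + b3) = (a1 + a2 + a3) + (b1 + b2 + b3)" by (simp add: algebra_simps)
  ultimately show ?thesis by simp
qed

lemma sum3s: "a1 + a2 + a3 = 0 \<Longrightarrow> c * a1 + c * a2 + c * a3 = (0::'a::comm_ring)"
  by (metis distrib_left mult_zero_right)

lemma car_add: "w \<in> dsum_carrier Rs \<Longrightarrow> w' \<in> dsum_carrier Rs \<Longrightarrow> w + w' \<in> dsum_carrier (Rs :: 'k::field rep list)"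
  unfolding carrier_iff by (simp add: sum3 del: One_nat_def)

lemma car_scale: "w \<in> dsum_carrier Rs \<Longrightarrow> (\<lambda>j i. c * w j i) \<in> dsum_carrier (Rs :: 'k::field rep list)"
  unfolding carrier_iff by (simp add: sum3s fun_eq_iff del: One_nat_def)

lemma perm_sum3: assumes "\<sigma> permutes {1,2,3::nat}"
  shows "v (\<sigma> 1) + v (\<sigma> 2) + v (\<sigma> 3) = v 1 + v 2 + (v 3 :: 'a::comm_monoid_add)"
proof -
  have "sum v {1,2,3} = sum (v \<circ> \<sigma>) {1,2,3}" by (rule sum.permute[OF assms])
  then show ?thesis by (simp add: add.assoc)
qed

lemma car_act: assumes "\<sigma> permutes {1,2,3}" "w \<in> dsum_carrier Rs"
  shows "dsum_act Rs \<sigma> w \<in> dsum_carrier (Rs :: 'k::field rep list)"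
proof -
  have ip: "inv \<sigma> permutes {1,2,3}" using assms(1) by (rule permutes_inv)
  have fx: "i \<notin> {1,2,3} \<Longrightarrow> inv \<sigma> i = i" for i using permutes_not_in[OF ip] by blast
  have s: "v (inv \<sigma> 1) + v (inv \<sigma> 2) + v (inv \<sigma> 3) = v 1 + v 2 + (v 3 :: 'k)" for v
    by (rule perm_sum3[OF ip])
  have big: "\<forall>j\<ge>9. dsum_act Rs \<sigma> w j = 0" by (simp add: dsum_act_def fun_eq_iff)
  show ?thesis using assms(2) big unfolding carrier_iff
    by (simp add: da s fx del: One_nat_def)
qed

lemma solve3: "a + b + c = 0 \<Longrightarrow> c = - a - (b::'a::ab_group_add)"
proof -
  assume h: "a + b + c = 0"
  have "c = (a + b + c) - a - b" by (simp add: algebra_simps)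
  then show ?thesis using h by simp
qed

lemma phi_psi: assumes "w \<in> dsum_carrier Rs" shows "phi (psi w) = (w :: nat \<Rightarrow> nat \<Rightarrow> 'k::field_char_0)"
proof (intro ext)
  fix j i :: nat
  note c = assms[unfolded carrier_iff]
  have s: "w 2 3 = - w 2 1 - w 2 2" "w 3 3 = - w 3 1 - w 3 2" "w 4 3 = - w 4 1 - w 4 2"
     "w 5 3 = - w 5 1 - w 5 2" "w 6 3 = - w 6 1 - w 6 2"
    using c by (auto intro!: solve3 simp del: One_nat_def)
  consider "j = 0" | "j = 1" | "j = 2" | "j = 3" | "j = 4" | "j = 5" | "j = 6" | "j = 7" | "j = 8" | "9 \<le> j"
    by (metis less9 not_le)
  then show "phi (psi w) j i = w j i"
  proof cases
    case 1
    then show ?thesis using c by (cases "i = 0") (simp_all add: phi_def psi_at s field_simps del: One_nat_def)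
  next
    case 2
    then show ?thesis using c by (cases "i = 0") (simp_all add: phi_def psi_at s field_simps del: One_nat_def)
  next
    case 3
    consider "i = 1" | "i = 2" | "i = 3" | "i \<notin> {1,2,3}" by blast
    then show ?thesis using c 3 by cases (simp_all add: phi_def psi_at s field_simps del: One_nat_def)
  next
    case 4
    consider "i = 1" | "i = 2" | "i = 3" | "i \<notin> {1,2,3}" by blast
    then show ?thesis using c 4 by cases (simp_all add: phi_def psi_at s field_simps del: One_nat_def)
  next
    case 5
    consider "i = 1" | "i = 2" | "i = 3" | "i \<notin> {1,2,3}" by blast
    then show ?thesis using c 5 by cases (simp_all add: phi_def psi_at s field_simps del: One_nat_def)
  next
    case 6
    consider "i = 1" | "i = 2" | "i = 3" | "i \<notin> {1,2,3}" by blast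
    then show ?thesis using c 6 by cases (simp_all add: phi_def psi_at s field_simps del: One_nat_def)
  next
    case 7
    consider "i = 1" | "i = 2" | "i = 3" | "i \<notin> {1,2,3}" by blast
    then show ?thesis using c 7 by cases (simp_all add: phi_def psi_at s field_simps del: One_nat_def)
  next
    case 8
    then show ?thesis using c by (cases "i = 0") (simp_all add: phi_def psi_at s field_simps del: One_nat_def)
  next
    case 9
    then show ?thesis using c by (cases "i = 0") (simp_all add: phi_def psi_at s field_simps del: One_nat_def)
  next
    case 10
    then have "j \<noteq> 0" "j \<noteq> 1" "j \<noteq> 2" "j \<noteq> 3" "j \<noteq> 4" "j \<noteq> 5" "j \<noteq> 6" "j \<noteq> 7" "j \<noteq> 8" by auto
    then show ?thesis using c 10 by (simp add: phi_def del: One_nat_def)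
  qed
qed

lemma Prim3_eq: "(Prim 3 :: 'k::field vec set) = {f. van f \<and> eqs3 f}"
  using Prim3_iff prim3_fwd prim3_bwd by blast

lemma psi_Prim: "psi w \<in> Prim 3" unfolding Prim3_eq by (simp add: van_psi psi_eqs)

lemma iso3: "sym3_iso (Prim 3 :: 'k::field_char_0 vec set) Rs"
  unfolding sym3_iso_def
proof (intro exI[of _ phi] conjI ballI allI impI)
  fix f g :: "'k vec" assume f: "f \<in> Prim 3" and g: "g \<in> Prim 3"
  have ef: "psi (phi f) = f" using f unfolding Prim3_eq by (auto intro: psi_phi)
  have eg: "psi (phi g) = g" using g unfolding Prim3_eq by (auto intro: psi_phi)
  have "phi (f + g) = phi (psi (phi f + phi g))" by (simp add: psi_add ef eg)
  also have "\<dots> = phi f + phi g" by (intro phi_psi car_add phi_carrier)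
  finally show "phi (f + g) = phi f + phi g" .
next
  fix c and f :: "'k vec" assume f: "f \<in> Prim 3"
  have ef: "psi (phi f) = f" using f unfolding Prim3_eq by (auto intro: psi_phi)
  have "phi (sc c f) = phi (psi (\<lambda>j i. c * phi f j i))" by (simp add: psi_scale ef)
  also have "\<dots> = (\<lambda>j i. c * phi f j i)" by (intro phi_psi car_scale phi_carrier)
  finally show "phi (sc c f) = (\<lambda>j i. c * phi f j i)" .
next
  show "bij_betw phi (Prim 3 :: 'k vec set) (dsum_carrier Rs)"
  proof (rule bij_betw_imageI)
    show "inj_on phi (Prim 3 :: 'k vec set)"
    proof (rule inj_onI)
      fix f g :: "'k vec" assume "f \<in> Prim 3" "g \<in> Prim 3" "phi f = phi g"
      then show "f = g" unfolding Prim3_eq by (metis mem_Collect_eq psi_phi)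
    qed
    show "phi ` (Prim 3 :: 'k vec set) = dsum_carrier Rs"
    proof
      show "phi ` (Prim 3 :: 'k vec set) \<subseteq> dsum_carrier Rs" using phi_carrier by blast
      show "dsum_carrier Rs \<subseteq> phi ` (Prim 3 :: 'k vec set)"
      proof
        fix w :: "nat \<Rightarrow> nat \<Rightarrow> 'k" assume "w \<in> dsum_carrier Rs"
        then have "w = phi (psi w)" by (simp add: phi_psi)
        then show "w \<in> phi ` Prim 3" using psi_Prim by blast
      qed
    qed
  qed
next
  fix \<sigma> :: "nat \<Rightarrow> nat" and f :: "'k vec" assume s: "\<sigma> permutes {1,2,3}" and f: "f \<in> Prim 3"
  have ef: "psi (phi f) = f" using f unfolding Prim3_eq by (auto intro: psi_phi)
  have "phi (act \<sigma> f) = phi (psi (dsum_act Rs \<sigma> (phi f)))" using psi_equiv[OF s, of "phi f"] ef by simp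
  also have "\<dots> = dsum_act Rs \<sigma> (phi f)" by (intro phi_psi car_act[OF s] phi_carrier)
  finally show "phi (act \<sigma> f) = dsum_act Rs \<sigma> (phi f)" .
qed


definition ebas :: "'k::field vec list" where
  "ebas = [mkv [1, 0, - 1, 0, 0, 0, 0, 0, 0, 0, 0, 0, 0, 0, 0, 0, 0, 0],
    mkv [0, 1, - 1, 0, 0, 0, 0, 0, 0, 0, 0, 0, 0, 0, 0, 0, 0, 0],
    mkv [0, 0, 0, 1, 0, - 1, 0, 0, 0, 0, 0, 0, 0, 0, 0, 0, 0, 0],
    mkv [0, 0, 0, 0, 1, - 1, 0, 0, 0, 0, 0, 0, 0, 0, 0, 0, 0, 0],
    mkv [0, 0, 0, 0, 0, 0, 1, 0, - 1, 0, 0, 0, 0, 0, 0, 0, 0, 0],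
    mkv [0, 0, 0, 0, 0, 0, 0, 1, - 1, 0, 0, 0, 0, 0, 0, 0, 0, 0],
    mkv [0, 0, 0, 0, 0, 0, 0, 0, 0, 1, 0, - 1, 0, 0, 0, 0, 0, 0],
    mkv [0, 0, 0, 0, 0, 0, 0, 0, 0, 0, 1, - 1, 0, 0, 0, 0, 0, 0],
    mkv [0, 0, 0, 0, 0, - 1, 0, 0, 1, 0, 0, - 1, 1, 0, 0, 0, 0, 0],
    mkv [0, 0, 0, 0, 0, - 1, 0, 0, 1, 0, 0, - 1, 0, 1, 0, 0, 0, 0],
    mkv [0, 0, 0, 0, 0, - 1, 0, 0, 1, 0, 0, - 1, 0, 0, 1, 0, 0, 0],
    mkv [0, 0, 1, 0, 0, - 1, 0, 0, 0, 0, 0, - 1, 0, 0, 0, 1, 0, 0],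
    mkv [0, 0, 1, 0, 0, - 1, 0, 0, 0, 0, 0, - 1, 0, 0, 0, 0, 1, 0],
    mkv [0, 0, 1, 0, 0, - 1, 0, 0, 0, 0, 0, - 1, 0, 0, 0, 0, 0, 1]]"

definition etr :: "mtree list" where
  "etr = [TL 1 2 3, TR 1 2 3, TL 1 3 2, TR 1 3 2, TL 2 1 3, TR 2 1 3, TL 2 3 1, TR 2 3 1, TL 3 1 2, TR 3 1 2, TC 3 1 2, TL 3 2 1, TR 3 2 1, TC 3 2 1]"


abbreviation N12 :: mtree where "N12 \<equiv> Node [Leaf 1, Leaf 2]"
abbreviation N21 :: mtree where "N21 \<equiv> Node [Leaf 2, Leaf 1]"

lemma T2_char: "(proper t \<and> mset (leaves t) = mset [1,2]) \<longleftrightarrow> t \<in> {N12, N21}"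
proof
  assume a: "proper t \<and> mset (leaves t) = mset [1,2]"
  then have "length (leaves t) = 2" by (metis size_mset length_Cons list.size(3) numeral_2_eq_2 One_nat_def)
  then obtain a b where t: "t = Node [Leaf a, Leaf b]" using len2 a by blast
  then have "mset [a,b] = mset [1,2]" using a by auto
  then have "(a,b) \<in> {(1,2),(2,1)}" by (rule mset2)
  then show "t \<in> {N12, N21}" using t by auto
next
  assume "t \<in> {N12, N21}"
  then show "proper t \<and> mset (leaves t) = mset [1,2]" by auto
qed

lemma upt2: "[1..<Suc 2] = [1,2::nat]" by (simp add: upt_rec)

definition van2 :: "'k::field vec \<Rightarrow> bool" where
  "van2 f \<longleftrightarrow> (\<forall>t. t \<notin> {N12, N21} \<longrightarrow> f t = 0)"

lemma Prim2_iff: "f \<in> Prim 2 \<longleftrightarrow> van2 f \<and> primitive f"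
proof -
  have "(\<forall>t\<in>supp f. proper t \<and> mset (leaves t) = mset [1..<Suc 2]) \<longleftrightarrow> van2 f"
    unfolding upt2 T2_char by (auto simp: van2_def supp_def)
  moreover have "van2 f \<Longrightarrow> finite (supp f)"
    by (rule finite_subset[of _ "{N12, N21}"]) (auto simp: van2_def supp_def)
  ultimately show ?thesis unfolding Prim_def by auto
qed

lemma delta12: "(delta N12 :: 'k::field vec2) = indv {(N12, One), (Leaf 1, Leaf 2), (Leaf 2, Leaf 1), (One, N12)}"
  by (rule delta_N2) simp
lemma delta21: "(delta N21 :: 'k::field vec2) = indv {(N21, One), (Leaf 2, Leaf 1), (Leaf 1, Leaf 2), (One, N21)}"
  by (rule delta_N2) simp

lemma Delta2: assumes "van2 f"
  shows "Delta f p = f N12 * delta N12 p + f N21 * delta N21 p"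
proof -
  have "Delta f p = (\<Sum>t\<in>supp f. f t * delta t p)" by (simp add: Delta_def)
  also have "\<dots> = (\<Sum>t\<in>{N12, N21}. f t * delta t p)"
    using assms by (intro sum.mono_neutral_left) (auto simp: van2_def supp_def)
  also have "\<dots> = f N12 * delta N12 p + f N21 * delta N21 p" by simp
  finally show ?thesis .
qed

lemma prim2_iff: fixes f :: "'k::field vec" assumes v: "van2 f"
  shows "primitive f \<longleftrightarrow> f N21 = - f N12"
proof
  assume "primitive f"
  then have "Delta f (Leaf 1, Leaf 2) = ten_one f (Leaf 1, Leaf 2) + one_ten f (Leaf 1, Leaf 2)"
    unfolding primitive_def by simp
  then have "f N12 + f N21 = 0"
    unfolding Delta2[OF v] delta12 delta21 by (simp add: indv_def ten_one_def one_ten_def)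
  then show "f N21 = - f N12" by (simp add: eq_neg_iff_add_eq_0 add.commute)
next
  assume e: "f N21 = - f N12"
  have fv: "f u = (if u = N12 then f N12 else if u = N21 then f N21 else 0)" for u
    using v by (auto simp: van2_def)
  show "primitive f" unfolding primitive_def
  proof (rule ext, clarify)
    fix u w
    show "Delta f (u, w) = (ten_one f + one_ten f) (u, w)"
      unfolding Delta2[OF v] delta12 delta21 ten_one_def one_ten_def plus_fun_def
      using v e by (auto simp: indv_def van2_def)
  qed
qed

lemma Prim2_eq: "(Prim 2 :: 'k::field vec set) = {sc c (bracket (X 1) (X 2)) | c. True}"
proof
  show "(Prim 2 :: 'k vec set) \<subseteq> {sc c (bracket (X 1) (X 2)) | c. True}"
  proof
    fix f :: "'k vec" assume "f \<in> Prim 2"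
    then have v: "van2 f" and e: "f N21 = - f N12" using Prim2_iff prim2_iff by blast+
    have "f = sc (f N12) (bracket (X 1) (X 2))"
      unfolding brX using v e by (auto simp: fun_eq_iff sc_def Bv_def van2_def)
    then show "f \<in> {sc c (bracket (X 1) (X 2)) | c. True}" by blast
  qed
next
  show "{sc c (bracket (X 1) (X 2)) | c. True} \<subseteq> (Prim 2 :: 'k vec set)"
  proof clarify
    fix c :: 'k
    have v: "van2 (sc c (bracket (X 1) (X 2)))" unfolding brX by (simp add: van2_def sc_def Bv_def)
    moreover have "sc c (bracket (X 1) (X 2)) N21 = - sc c (bracket (X 1) (X 2)) N12"
      unfolding brX by (simp add: sc_def Bv_def)
    ultimately show "sc c (bracket (X 1) (X 2)) \<in> Prim 2" using Prim2_iff prim2_iff by blast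
  qed
qed

lemma eqs3_rules: assumes "eqs3 f"
  shows "f (TC 1 2 3) = f (TL 3 2 1) + f (TR 3 2 1) + f (TC 3 2 1) - f (TL 1 2 3) - f (TR 1 2 3)"
     "f (TC 2 1 3) = f (TL 3 1 2) + f (TR 3 1 2) + f (TC 3 1 2) - f (TL 2 1 3) - f (TR 2 1 3)"
     "f (TC 1 3 2) = - (f (TL 3 1 2) + f (TR 3 1 2) + f (TC 3 1 2)) - (f (TL 3 2 1) + f (TR 3 2 1) + f (TC 3 2 1)) - f (TL 1 3 2) - f (TR 1 3 2)"
     "f (TC 2 3 1) = - (f (TL 3 1 2) + f (TR 3 1 2) + f (TC 3 1 2)) - (f (TL 3 2 1) + f (TR 3 2 1) + f (TC 3 2 1)) - f (TL 2 3 1) - f (TR 2 3 1)"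
  using assms unfolding eqs3_def G_def by auto

lemma subspace_Prim3: "VS.subspace (Prim 3 :: 'k::field vec set)"
  unfolding VS.subspace_def Prim3_eq
proof (intro conjI ballI allI)
  show "0 \<in> {f :: 'k vec. van f \<and> eqs3 f}" by (simp add: van_zero eqs3_def G_def)
next
  fix x y :: "'k vec" assume x: "x \<in> {f. van f \<and> eqs3 f}" and y: "y \<in> {f. van f \<and> eqs3 f}"
  have rx: "eqs3 x" and ry: "eqs3 y" using x y by auto
  show "x + y \<in> {f. van f \<and> eqs3 f}"
    using x y van_add
    by (simp add: eqs3_def G_def eqs3_rules[OF rx] eqs3_rules[OF ry] algebra_simps del: One_nat_def)
next
  fix c and x :: "'k vec" assume x: "x \<in> {f. van f \<and> eqs3 f}"
  have rx: "eqs3 x" using x by auto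
  show "sc c x \<in> {f. van f \<and> eqs3 f}"
    using x van_sc
    by (simp add: sc_def eqs3_def G_def eqs3_rules[OF rx] algebra_simps del: One_nat_def)
qed

abbreviation gb :: "'k::field vec" where "gb \<equiv> assoc_b (X 1) (X 2) (X 3)"
abbreviation gt :: "'k::field vec" where "gt \<equiv> assoc_t (X 1) (X 2) (X 3)"
abbreviation gk :: "'k::field vec" where "gk \<equiv> bracket (bracket (X 1) (X 2)) (X 3)"

lemma van_gens: "van (gb :: 'k::field vec)" "van (gt :: 'k::field vec)" "van (gk :: 'k::field vec)"
  unfolding assoc_bX assoc_tX brbrX
  by (auto intro!: van_add van_diff van_Bv simp: T3_def)

lemma eqs_gens: "eqs3 (gb :: 'k::field vec)" "eqs3 (gt :: 'k::field vec)" "eqs3 (gk :: 'k::field vec)"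
  unfolding assoc_bX assoc_tX brbrX
  by (simp_all add: eqs3_def G_def Bv_def)

lemma act_Prim: assumes "\<sigma> permutes {1,2,3}" "f \<in> Prim 3"
  shows "act \<sigma> f \<in> (Prim 3 :: 'k::field_char_0 vec set)"
proof -
  have "psi (phi f) = f" using assms(2) unfolding Prim3_eq by (auto intro: psi_phi)
  then have "act \<sigma> f = psi (dsum_act Rs \<sigma> (phi f))" using psi_equiv[OF assms(1), of "phi f"] by simp
  then show ?thesis using psi_Prim by simp
qed

abbreviation Orb :: "'k::field vec set" where
  "Orb \<equiv> {act \<sigma> g | \<sigma> g. \<sigma> permutes {1,2,3} \<and>
              g \<in> {assoc_t (X 1) (X 2) (X 3), assoc_b (X 1) (X 2) (X 3),
                   bracket (bracket (X 1) (X 2)) (X 3)}}"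

lemma Orb_sub: "(Orb :: 'k::field_char_0 vec set) \<subseteq> Prim 3"
proof clarify
  fix \<sigma> :: "nat \<Rightarrow> nat" and g :: "'k vec"
  assume s: "\<sigma> permutes {1,2,3}" and g: "g \<in> {gt, gb, gk}"
  have "g \<in> Prim 3" using g van_gens eqs_gens unfolding Prim3_eq by auto
  then show "act \<sigma> g \<in> Prim 3" by (rule act_Prim[OF s])
qed

lemma orb_decomp: fixes f :: "'a::field vec" assumes v: "van f" and e: "eqs3 f"
  shows "f = sc ((f (TL 1 2 3) + f (TR 1 2 3) + f (TC 1 2 3))) (act id gk) + sc ((f (TL 1 3 2) + f (TR 1 3 2) + f (TC 1 3 2))) (act (Transposition.transpose 2 3) gk) + sc (- (f (TR 1 2 3))) (act id gb) + sc (- (f (TR 1 3 2))) (act (Transposition.transpose 2 3) gb) + sc (- (f (TR 2 1 3) + (f (TL 1 3 2) + f (TR 1 3 2) + f (TC 1 3 2)))) (act (Transposition.transpose 1 2) gb) + sc (- (f (TR 2 3 1) - (f (TL 1 3 2) + f (TR 1 3 2) + f (TC 1 3 2)))) (act (Transposition.transpose 1 2 \<circ> Transposition.transpose 2 3) gb) + sc (- (f (TR 3 1 2) + (f (TL 1 2 3) + f (TR 1 2 3) + f (TC 1 2 3)))) (act (Transposition.transpose 2 3 \<circ> Transposition.transpose 1 2) gb) + sc (- (f (TR 3 2 1) - (f (TL 1 2 3) + f (TR 1 2 3) + f (TC 1 2 3)))) (act (Transposition.transpose 1 3) gb) + sc (- f (TC 1 2 3)) (act id gt) + sc (- f (TC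 1 3 2)) (act (Transposition.transpose 2 3) gt) + sc (- f (TC 2 1 3)) (act (Transposition.transpose 1 2) gt) + sc (- f (TC 2 3 1)) (act (Transposition.transpose 1 2 \<circ> Transposition.transpose 2 3) gt) + sc (- f (TC 3 1 2)) (act (Transposition.transpose 2 3 \<circ> Transposition.transpose 1 2) gt) + sc (- f (TC 3 2 1)) (act (Transposition.transpose 1 3) gt)"
proof (rule eq_T3[OF v])
  have p: "Transposition.transpose a b permutes {1,2,3::nat}" if "a \<in> {1,2,3}" "b \<in> {1,2,3}" for a b
    using that by (rule permutes_swap_id)
  have vg: "van (act \<sigma> g)" if "\<sigma> permutes {1,2,3}" "g \<in> {gb, gt, gk}" for \<sigma> :: "nat \<Rightarrow> nat" and g :: "'a vec"
    using that van_gens by (auto intro: van_act)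
  show "van (sc ((f (TL 1 2 3) + f (TR 1 2 3) + f (TC 1 2 3))) (act id gk) + sc ((f (TL 1 3 2) + f (TR 1 3 2) + f (TC 1 3 2))) (act (Transposition.transpose 2 3) gk) + sc (- (f (TR 1 2 3))) (act id gb) + sc (- (f (TR 1 3 2))) (act (Transposition.transpose 2 3) gb) + sc (- (f (TR 2 1 3) + (f (TL 1 3 2) + f (TR 1 3 2) + f (TC 1 3 2)))) (act (Transposition.transpose 1 2) gb) + sc (- (f (TR 2 3 1) - (f (TL 1 3 2) + f (TR 1 3 2) + f (TC 1 3 2)))) (act (Transposition.transpose 1 2 \<circ> Transposition.transpose 2 3) gb) + sc (- (f (TR 3 1 2) + (f (TL 1 2 3) + f (TR 1 2 3) + f (TC 1 2 3)))) (act (Transposition.transpose 2 3 \<circ> Transposition.transpose 1 2) gb) + sc (- (f (TR 3 2 1) - (f (TL 1 2 3) + f (TR 1 2 3) + f (TC 1 2 3)))) (act (Transposition.transpose 1 3) gb) + sc (- f (TC 1 2 3)) (act id gt) + sc (- f (TC 1 3 2)) (act (Transposition.transpose 2 3) gt) + sc (- f (TC 2 1 3)) (act (Transposition.transpose 1 2) gt) + sc (- f (TC 2 3 1)) (act (Transposition.transpose 1 2 \<circ> Transposition.transpose 2 3) gt) + sc (- f (TC 3 1 2)) (act (Transposition.transpose 2 3 \<circ> Transposition.transpose 1 2) gt) + sc (- f (TC 3 2 1)) (act (Transposition.transpose 1 3) gt))"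
    by (intro van_add van_sc vg permutes_compose p) auto
  show "\<forall>t\<in>set T3. f t = (sc ((f (TL 1 2 3) + f (TR 1 2 3) + f (TC 1 2 3))) (act id gk) + sc ((f (TL 1 3 2) + f (TR 1 3 2) + f (TC 1 3 2))) (act (Transposition.transpose 2 3) gk) + sc (- (f (TR 1 2 3))) (act id gb) + sc (- (f (TR 1 3 2))) (act (Transposition.transpose 2 3) gb) + sc (- (f (TR 2 1 3) + (f (TL 1 3 2) + f (TR 1 3 2) + f (TC 1 3 2)))) (act (Transposition.transpose 1 2) gb) + sc (- (f (TR 2 3 1) - (f (TL 1 3 2) + f (TR 1 3 2) + f (TC 1 3 2)))) (act (Transposition.transpose 1 2 \<circ> Transposition.transpose 2 3) gb) + sc (- (f (TR 3 1 2) + (f (TL 1 2 3) + f (TR 1 2 3) + f (TC 1 2 3)))) (act (Transposition.transpose 2 3 \<circ> Transposition.transpose 1 2) gb) + sc (- (f (TR 3 2 1) - (f (TL 1 2 3) + f (TR 1 2 3) + f (TC 1 2 3)))) (act (Transposition.transpose 1 3) gb) + sc (- f (TC 1 2 3)) (act id gt) + sc (- f (TC 1 3 2)) (act (Transposition.transpose 2 3) gt) + sc (- f (TC 2 1 3)) (act (Transposition.transpose 1 2) gt) + sc (- f (TC 2 3 1)) (act (Transposition.transpose 1 2 \<circ> Transposition.transpose 2 3) gt) + sc (- f (TC 3 1 2)) (act (Transposition.transpose 2 3 \<circ> Transposition.transpose 1 2) gt) + sc (- f (TC 3 2 1)) (act (Transposition.transpose 1 3) gt)) t"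
    unfolding T3_def
    by (simp add: sc_def act_comp act_id act_tr assoc_bX assoc_tX brbrX Bv_def eqs3_rules[OF e] algebra_simps
         del: One_nat_def)
qed

lemma Prim3_span: "(Prim 3 :: 'k::field_char_0 vec set) = VS.span Orb"
proof
  show "VS.span Orb \<subseteq> (Prim 3 :: 'k vec set)"
    by (rule VS.span_minimal[OF Orb_sub subspace_Prim3])
  show "(Prim 3 :: 'k vec set) \<subseteq> VS.span Orb"
  proof
    fix f :: "'k vec" assume "f \<in> Prim 3"
    then have v: "van f" and e: "eqs3 f" unfolding Prim3_eq by auto
    have p: "Transposition.transpose a b permutes {1,2,3::nat}" if "a \<in> {1,2,3}" "b \<in> {1,2,3}" for a b
      using that by (rule permutes_swap_id)
    have m: "act \<sigma> g \<in> VS.span Orb" if "\<sigma> permutes {1,2,3}" "g \<in> {gt, gb, gk}" for \<sigma> :: "nat \<Rightarrow> nat" and g :: "'k vec"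
      using that by (intro VS.span_base) blast
    have "sc ((f (TL 1 2 3) + f (TR 1 2 3) + f (TC 1 2 3))) (act id gk) + sc ((f (TL 1 3 2) + f (TR 1 3 2) + f (TC 1 3 2))) (act (Transposition.transpose 2 3) gk) + sc (- (f (TR 1 2 3))) (act id gb) + sc (- (f (TR 1 3 2))) (act (Transposition.transpose 2 3) gb) + sc (- (f (TR 2 1 3) + (f (TL 1 3 2) + f (TR 1 3 2) + f (TC 1 3 2)))) (act (Transposition.transpose 1 2) gb) + sc (- (f (TR 2 3 1) - (f (TL 1 3 2) + f (TR 1 3 2) + f (TC 1 3 2)))) (act (Transposition.transpose 1 2 \<circ> Transposition.transpose 2 3) gb) + sc (- (f (TR 3 1 2) + (f (TL 1 2 3) + f (TR 1 2 3) + f (TC 1 2 3)))) (act (Transposition.transpose 2 3 \<circ> Transposition.transpose 1 2) gb) + sc (- (f (TR 3 2 1) - (f (TL 1 2 3) + f (TR 1 2 3) + f (TC 1 2 3)))) (act (Transposition.transpose 1 3) gb) + sc (- f (TC 1 2 3)) (act id gt) + sc (- f (TC 1 3 2)) (act (Transposition.transpose 2 3) gt) + sc (- f (TC 2 1 3)) (act (Transposition.transpose 1 2) gt) + sc (- f (TC 2 3 1)) (act (Transposition.transpose 1 2 \<circ> Transposition.transpose 2 3) gt) + sc (- f (TC 3 1 2)) (act (Transposition.transpose 2 3 \<circ> Transposition.transpose 1 2) gt) + sc (- f (TC 3 2 1)) (act (Transposition.transpose 1 3) gt) \<in> VS.span Orb"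
      by (intro VS.span_add VS.span_scale m permutes_compose p) auto
    then show "f \<in> VS.span Orb" using orb_decomp[OF v e] by simp
  qed
qed


lemma sum_app: "(\<Sum>v\<in>T. F v) x = (\<Sum>v\<in>T. F v x)"
  by (induction T rule: infinite_finite_induct) auto

lemma indep_eval:
  fixes bs :: "'k::field vec list" and ts :: "mtree list"
  assumes ev: "\<forall>i<length bs. \<forall>j<length bs. (bs!i) (ts!j) = (if i = j then 1 else 0)"
  shows "distinct bs \<and> \<not> VS.dependent (set bs)"
proof
  show "distinct bs"
    unfolding distinct_conv_nth
  proof (intro allI impI)
    fix i j assume ij: "i < length bs" "j < length bs" "i \<noteq> j"
    show "bs ! i \<noteq> bs ! j"
    proof
      assume "bs ! i = bs ! j"
      then have "(bs ! i) (ts ! i) = (bs ! j) (ts ! i)" by simp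
      then show False using ev ij by auto
    qed
  qed
  show "\<not> VS.dependent (set bs)"
    unfolding VS.dependent_explicit
  proof clarify
    fix T u v assume fin: "finite T" and sub: "T \<subseteq> set bs" and s0: "(\<Sum>v\<in>T. sc (u v) v) = 0"
      and vT: "v \<in> T" and uv: "u v \<noteq> 0"
    obtain i where i: "i < length bs" "bs ! i = v" using sub vT by (metis in_set_conv_nth subsetD)
    have "0 = (\<Sum>v\<in>T. sc (u v) v) (ts ! i)" using s0 by simp
    also have "\<dots> = (\<Sum>v'\<in>T. u v' * v' (ts ! i))" by (simp add: sum_app sc_def)
    also have "\<dots> = (\<Sum>v'\<in>T. if v' = v then u v' else 0)"
    proof (rule sum.cong[OF refl])
      fix v' assume "v' \<in> T"
      then obtain j where j: "j < length bs" "bs ! j = v'" using sub by (metis in_set_conv_nth subsetD)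
      show "u v' * v' (ts ! i) = (if v' = v then u v' else 0)"
        using ev i j by (cases "j = i") auto
    qed
    also have "\<dots> = u v" using fin vT by simp
    finally show False using uv by simp
  qed
qed

lemma less14: "(j::nat) < 14 \<Longrightarrow> j = 0 \<or> j = 1 \<or> j = 2 \<or> j = 3 \<or> j = 4 \<or> j = 5 \<or> j = 6 \<or> j = 7 \<or> j = 8
   \<or> j = 9 \<or> j = 10 \<or> j = 11 \<or> j = 12 \<or> j = 13"
  by arith

lemma all_less14: "(\<forall>j<(14::nat). P j) \<longleftrightarrow> P 0 \<and> P 1 \<and> P 2 \<and> P 3 \<and> P 4 \<and> P 5 \<and> P 6 \<and> P 7 \<and> P 8
   \<and> P 9 \<and> P 10 \<and> P 11 \<and> P 12 \<and> P 13"
  using less14 by (auto simp del: One_nat_def)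

lemma len_ebas: "length (ebas :: 'k::field vec list) = 14" by (simp add: ebas_def)

lemma ebas_ev: "\<forall>i<length (ebas :: 'k::field vec list). \<forall>j<length (ebas :: 'k vec list).
   ((ebas :: 'k vec list) ! i) (etr ! j) = (if i = j then 1 else 0)"
  unfolding len_ebas all_less14
  by (simp add: ebas_def etr_def mkv_def T3_def del: One_nat_def)

lemma ebas_Prim: "set (ebas :: 'k::field vec list) \<subseteq> Prim 3"
proof -
  have "\<forall>b\<in>set (ebas :: 'k vec list). van b" by (simp add: ebas_def van_mkv)
  moreover have "\<forall>b\<in>set (ebas :: 'k vec list). eqs3 b"
    unfolding ebas_def by (simp add: eqs3_def G_def mkv_def T3_def del: One_nat_def)
  ultimately show ?thesis unfolding Prim3_eq by auto
qed

lemma sum_list_app: "(sum_list fs) x = sum_list (map (\<lambda>g. g x) fs)"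
  by (induction fs) auto

lemma span_map2: "sum_list (map2 sc cs bs) \<in> VS.span (set (bs :: 'k::field vec list))"
proof (induction bs arbitrary: cs)
  case Nil
  have "sum_list (map2 sc cs ([] :: 'k vec list)) = 0" by simp
  then show ?case using VS.span_zero by metis
next
  case (Cons b bs)
  show ?case
  proof (cases cs)
    case Nil
    then have "sum_list (map2 sc cs (b # bs)) = 0" by simp
    then show ?thesis using VS.span_zero by metis
  next
    case (Cons c cs')
    have "sum_list (map2 sc cs' bs) \<in> VS.span (set (b # bs))"
      using Cons.IH by (rule VS.span_mono[THEN subsetD, rotated]) auto
    moreover have "sc c b \<in> VS.span (set (b # bs))" by (intro VS.span_scale VS.span_base) simp
    moreover have "sum_list (map2 sc cs (b # bs)) = sc c b + sum_list (map2 sc cs' bs)" using Cons by simp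
    ultimately show ?thesis by (metis VS.span_add)
  qed
qed

lemma Prim3_ebas: "(Prim 3 :: 'k::field vec set) = VS.span (set ebas)"
proof
  show "VS.span (set ebas) \<subseteq> (Prim 3 :: 'k vec set)"
    by (rule VS.span_minimal[OF ebas_Prim subspace_Prim3])
  show "(Prim 3 :: 'k vec set) \<subseteq> VS.span (set ebas)"
  proof
    fix f :: "'k vec" assume "f \<in> Prim 3"
    then have v: "van f" and e: "eqs3 f" unfolding Prim3_eq by auto
    have vs: "van (sum_list (map2 sc (map f etr) (ebas :: 'k vec list)))"
      unfolding ebas_def etr_def by (simp add: van_add van_sc van_mkv van_zero del: One_nat_def)
    have "f = sum_list (map2 sc (map f etr) ebas)"
      by (rule eq_T3[OF v vs]) (simp add: sum_list_app ebas_def etr_def mkv_def T3_def sc_def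
            eqs3_rules[OF e] algebra_simps del: One_nat_def)
    then show "f \<in> VS.span (set ebas)" using span_map2 by metis
  qed
qed

lemma dim_Prim3: "VS.dim (Prim 3 :: 'k::field vec set) = 14"
proof -
  have d: "distinct (ebas :: 'k vec list) \<and> \<not> VS.dependent (set (ebas :: 'k vec list))"
    by (rule indep_eval[OF ebas_ev])
  have "VS.dim (VS.span (set (ebas :: 'k vec list))) = card (set (ebas :: 'k vec list))"
    using d by (intro VS.dim_span_eq_card_independent) auto
  then have "VS.dim (Prim 3 :: 'k vec set) = card (set (ebas :: 'k vec list))"
    unfolding Prim3_ebas by simp
  also have "\<dots> = 14" using d by (simp add: distinct_card len_ebas)
  finally show ?thesis .
qed

theorem proposition4p5p5:
  fixes K :: "'k::field_char_0 itself"
  shows "(Prim 2 :: 'k vec set) = {sc c (bracket (X 1) (X 2)) | c. True}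
    \<and> Vector_Spaces.vector_space.dim (sc :: 'k \<Rightarrow> 'k vec \<Rightarrow> 'k vec) (Prim 3) = 14
    \<and> (Prim 3 :: 'k vec set) = Modules.module.span (sc :: 'k \<Rightarrow> 'k vec \<Rightarrow> 'k vec)
           {act \<sigma> g | \<sigma> g. \<sigma> permutes {1,2,3} \<and>
              g \<in> {assoc_t (X 1) (X 2) (X 3), assoc_b (X 1) (X 2) (X 3),
                   bracket (bracket (X 1) (X 2)) (X 3)}}
    \<and> (bracket (bracket (X 2) (X 1)) (X 3) :: 'k vec) = - bracket (bracket (X 1) (X 2)) (X 3)
    \<and> (bracket (bracket (X 1) (X 2)) (X 3) + bracket (bracket (X 3) (X 1)) (X 2)
           + bracket (bracket (X 2) (X 3)) (X 1) :: 'k vec)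
         = assoc_b (X 1) (X 2) (X 3) - assoc_b (X 2) (X 1) (X 3) + assoc_b (X 3) (X 1) (X 2)
           - assoc_b (X 1) (X 3) (X 2) + assoc_b (X 2) (X 3) (X 1) - assoc_b (X 3) (X 2) (X 1)
    \<and> sym3_iso (Prim 3 :: 'k vec set)
           [V_triv, V_triv, V_std, V_std, V_std, V_std, V_std, V_sign, V_sign]"
  using Prim2_eq dim_Prim3 Prim3_span prim_id2 prim_id3 iso3 by blast


end
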